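(* Let $G$ be a finite subgroup of $\mathrm{U}(q)$, let $n\ge 1$, and let $\mathcal{H}=(\mathbb{C}^q)^{\otimes n}$, on which $\mathrm{U}(q)$ (and hence $G$) acts by $U\mapsto U^{\otimes n}$. Let $\mathcal{C}\subseteq\mathcal{H}$ be a subspace that transforms in an irreducible representation $\boldsymbol{\lambda}$ of $G$ (with character $\lambda$), and let $E$ be an operator on $\mathcal{H}$ that transforms in an irreducible representation $\boldsymbol{R}$ of $\mathrm{U}(q)$. If $\langle 1, \lambda^* R^{\downarrow}\lambda\rangle = 0$, then the Knill–Laflamme condition holds for $E$ on $\mathcal{C}$: there exists $c_E\in\mathbb{C}$ such that $\langle\psi|E|\phi\rangle = c_E\langle\psi|\phi\rangle$ for all $|\psi\rangle,|\phi\rangle\in\mathcal{C}$.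
   Context: A subspace $\mathcal{C}\subseteq\mathcal{H}$ transforms in the representation $\boldsymbol{\lambda}$ of $G$ if it is invariant under all $g^{\otimes n}$, $g\in G$, and the resulting representation of $G$ on $\mathcal{C}$ is isomorphic to $\boldsymbol{\lambda}$. An operator $E$ on $\mathcal{H}$ transforms in the representation $\boldsymbol{R}$ of $\mathrm{U}(q)$ if $E$ lies in a subspace $W$ of operators on $\mathcal{H}$ that is invariant under conjugation $X\mapsto U^{\otimes n}X(U^{\otimes n})^{\dagger}$ for all $U\in\mathrm{U}(q)$ and such that this conjugation representation of $\mathrm{U}(q)$ on $W$ is isomorphic to $\boldsymbol{R}$. $R^{\downarrow}$ is the character of the restriction of $\boldsymbol{R}$ to $G$, $1$ is the trivial character, $\lambda^*$ is the complex conjugate of $\lambda$, products of characters are pointwise, and $\langle\chi,\psi\rangle:=\frac{1}{|G|}\sum_{g\in G}\overline{\chi(g)}\psi(g)$. *)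

theory Defs
  imports "Jordan_Normal_Form.Matrix"
begin

definition cadj :: "complex mat \<Rightarrow> complex mat" where
  "cadj A = mat (dim_col A) (dim_row A) (\<lambda>(i,j). cnj (A $$ (j,i)))"

definition unitary_mat :: "nat \<Rightarrow> complex mat \<Rightarrow> bool" where
  "unitary_mat q U \<longleftrightarrow> U \<in> carrier_mat q q \<and> U * cadj U = 1\<^sub>m q \<and> cadj U * U = 1\<^sub>m q"

definition finite_subgroup_U :: "nat \<Rightarrow> complex mat set \<Rightarrow> bool" where
  "finite_subgroup_U q G \<longleftrightarrow> finite G \<and> (\<forall>g\<in>G. unitary_mat q g) \<and> 1\<^sub>m q \<in> G
     \<and> (\<forall>g\<in>G. \<forall>h\<in>G. g * h \<in> G) \<and> (\<forall>g\<in>G. cadj g \<in> G)"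

(* k-th digit in base q of the index i: the k-th tensor factor of the standard
   basis vector e_i of (C^q)^{\<otimes>n}, identified with C^(q^n) *)
definition digit :: "nat \<Rightarrow> nat \<Rightarrow> nat \<Rightarrow> nat" where
  "digit q k i = (i div q ^ k) mod q"

definition tensor_pow :: "nat \<Rightarrow> nat \<Rightarrow> complex mat \<Rightarrow> complex mat" where
  "tensor_pow q n U = mat (q ^ n) (q ^ n)
     (\<lambda>(i,j). \<Prod>k<n. U $$ (digit q k i, digit q k j))"

definition vinner :: "complex vec \<Rightarrow> complex vec \<Rightarrow> complex" where
  "vinner \<psi> \<phi> = (\<Sum>i<dim_vec \<phi>. cnj (\<psi> $ i) * \<phi> $ i)"

definition vsubspace :: "nat \<Rightarrow> complex vec set \<Rightarrow> bool" where
  "vsubspace N S \<longleftrightarrow> S \<subseteq> carrier_vec N \<and> 0\<^sub>v N \<in> S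
     \<and> (\<forall>x\<in>S. \<forall>y\<in>S. x + y \<in> S) \<and> (\<forall>c. \<forall>x\<in>S. c \<cdot>\<^sub>v x \<in> S)"

definition vonb :: "nat \<Rightarrow> complex vec set \<Rightarrow> complex vec list \<Rightarrow> bool" where
  "vonb N S bs \<longleftrightarrow> set bs \<subseteq> S
     \<and> (\<forall>i<length bs. \<forall>j<length bs. vinner (bs ! i) (bs ! j) = (if i = j then 1 else 0))
     \<and> (\<forall>x\<in>S. \<forall>k<N. x $ k = (\<Sum>i<length bs. vinner (bs ! i) x * (bs ! i) $ k))"

definition vinvariant :: "'g set \<Rightarrow> ('g \<Rightarrow> complex vec \<Rightarrow> complex vec) \<Rightarrow> complex vec set \<Rightarrow> bool" where
  "vinvariant G \<rho> S \<longleftrightarrow> (\<forall>g\<in>G. \<forall>x\<in>S. \<rho> g x \<in> S)"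

definition virreducible :: "nat \<Rightarrow> 'g set \<Rightarrow> ('g \<Rightarrow> complex vec \<Rightarrow> complex vec) \<Rightarrow> complex vec set \<Rightarrow> bool" where
  "virreducible N G \<rho> S \<longleftrightarrow> S \<noteq> {0\<^sub>v N} \<and>
     (\<forall>T. vsubspace N T \<and> T \<subseteq> S \<and> vinvariant G \<rho> T \<longrightarrow> T = {0\<^sub>v N} \<or> T = S)"

definition vcharacter :: "nat \<Rightarrow> ('g \<Rightarrow> complex vec \<Rightarrow> complex vec) \<Rightarrow> complex vec set \<Rightarrow> 'g \<Rightarrow> complex" where
  "vcharacter N \<rho> S g = (let bs = (SOME bs. vonb N S bs) in
     \<Sum>i<length bs. vinner (bs ! i) (\<rho> g (bs ! i)))"

definition minner :: "complex mat \<Rightarrow> complex mat \<Rightarrow> complex" where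
  "minner A B = (\<Sum>i<dim_row B. \<Sum>j<dim_col B. cnj (A $$ (i,j)) * B $$ (i,j))"

definition msubspace :: "nat \<Rightarrow> complex mat set \<Rightarrow> bool" where
  "msubspace N S \<longleftrightarrow> S \<subseteq> carrier_mat N N \<and> 0\<^sub>m N N \<in> S
     \<and> (\<forall>x\<in>S. \<forall>y\<in>S. x + y \<in> S) \<and> (\<forall>c. \<forall>x\<in>S. c \<cdot>\<^sub>m x \<in> S)"

definition monb :: "nat \<Rightarrow> complex mat set \<Rightarrow> complex mat list \<Rightarrow> bool" where
  "monb N S bs \<longleftrightarrow> set bs \<subseteq> S
     \<and> (\<forall>i<length bs. \<forall>j<length bs. minner (bs ! i) (bs ! j) = (if i = j then 1 else 0))
     \<and> (\<forall>x\<in>S. \<forall>k<N. \<forall>l<N. x $$ (k,l) = (\<Sum>i<length bs. minner (bs ! i) x * (bs ! i) $$ (k,l)))"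

definition minvariant :: "'g set \<Rightarrow> ('g \<Rightarrow> complex mat \<Rightarrow> complex mat) \<Rightarrow> complex mat set \<Rightarrow> bool" where
  "minvariant G \<rho> S \<longleftrightarrow> (\<forall>g\<in>G. \<forall>x\<in>S. \<rho> g x \<in> S)"

definition mirreducible :: "nat \<Rightarrow> 'g set \<Rightarrow> ('g \<Rightarrow> complex mat \<Rightarrow> complex mat) \<Rightarrow> complex mat set \<Rightarrow> bool" where
  "mirreducible N G \<rho> S \<longleftrightarrow> S \<noteq> {0\<^sub>m N N} \<and>
     (\<forall>T. msubspace N T \<and> T \<subseteq> S \<and> minvariant G \<rho> T \<longrightarrow> T = {0\<^sub>m N N} \<or> T = S)"

definition mcharacter :: "nat \<Rightarrow> ('g \<Rightarrow> complex mat \<Rightarrow> complex mat) \<Rightarrow> complex mat set \<Rightarrow> 'g \<Rightarrow> complex" where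
  "mcharacter N \<rho> S g = (let bs = (SOME bs. monb N S bs) in
     \<Sum>i<length bs. minner (bs ! i) (\<rho> g (bs ! i)))"

definition tensor_action :: "nat \<Rightarrow> nat \<Rightarrow> complex mat \<Rightarrow> complex vec \<Rightarrow> complex vec" where
  "tensor_action q n U v = tensor_pow q n U *\<^sub>v v"

definition conj_action :: "nat \<Rightarrow> nat \<Rightarrow> complex mat \<Rightarrow> complex mat \<Rightarrow> complex mat" where
  "conj_action q n U X = tensor_pow q n U * X * cadj (tensor_pow q n U)"

end

theory Submission imports Defs begin

definition ipI :: "'i set \<Rightarrow> ('i \<Rightarrow> complex) \<Rightarrow> ('i \<Rightarrow> complex) \<Rightarrow> complex" where
  "ipI I f g = (\<Sum>i\<in>I. cnj (f i) * g i)"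

lemma ipI_cnj: "cnj (ipI I f g) = ipI I g f"
  unfolding ipI_def by (simp add: mult.commute)

lemma ipI_self: "ipI I f f = of_real (\<Sum>i\<in>I. (cmod (f i))^2)"
proof -
  have "cnj (f i) * f i = of_real ((cmod (f i))^2)" for i
    unfolding complex_norm_square by (simp add: mult.commute)
  then show ?thesis unfolding ipI_def by simp
qed

lemma ipI_right_lin:
  "ipI I f (\<lambda>i. g i - (\<Sum>j<k. c j * h j i)) = ipI I f g - (\<Sum>j<k. c j * ipI I f (h j))"
proof -
  have "ipI I f (\<lambda>i. g i - (\<Sum>j<k. c j * h j i)) = (\<Sum>i\<in>I. cnj (f i) * g i - (\<Sum>j<k. c j * (cnj (f i) * h j i)))"
    unfolding ipI_def by (intro sum.cong refl) (simp add: right_diff_distrib sum_distrib_left mult.left_commute)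
  also have "\<dots> = ipI I f g - (\<Sum>i\<in>I. \<Sum>j<k. c j * (cnj (f i) * h j i))"
    unfolding ipI_def by (rule sum_subtractf)
  also have "(\<Sum>i\<in>I. \<Sum>j<k. c j * (cnj (f i) * h j i)) = (\<Sum>j<k. \<Sum>i\<in>I. c j * (cnj (f i) * h j i))"
    by (rule sum.swap)
  also have "\<dots> = (\<Sum>j<k. c j * ipI I f (h j))"
    unfolding ipI_def by (simp add: sum_distrib_left)
  finally show ?thesis .
qed

lemma ipI_left_lin:
  "ipI I (\<lambda>i. g i - (\<Sum>j<k. c j * h j i)) f = ipI I g f - (\<Sum>j<k. cnj (c j) * ipI I (h j) f)"
proof -
  have "ipI I (\<lambda>i. g i - (\<Sum>j<k. c j * h j i)) f = cnj (ipI I f (\<lambda>i. g i - (\<Sum>j<k. c j * h j i)))"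
    by (simp add: ipI_cnj)
  also have "\<dots> = ipI I g f - (\<Sum>j<k. cnj (c j) * ipI I (h j) f)"
    by (simp add: ipI_right_lin ipI_cnj)
  finally show ?thesis .
qed

definition orthonormal :: "'i set \<Rightarrow> nat \<Rightarrow> (nat \<Rightarrow> 'i \<Rightarrow> complex) \<Rightarrow> bool" where
  "orthonormal I k b \<longleftrightarrow> (\<forall>i<k. \<forall>j<k. ipI I (b i) (b j) = (if i = j then 1 else 0))"

lemma sum_delta_lt: fixes l k :: nat assumes "l < k" shows "(\<Sum>j<k. a j * (if j = l then 1 else 0)) = (a l :: complex)"
proof -
  have "(\<Sum>j<k. a j * (if j = l then 1 else 0)) = (\<Sum>j<k. if j = l then a j else 0)"
    by (intro sum.cong) auto
  also have "\<dots> = a l" using assms by (subst sum.delta) auto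
  finally show ?thesis .
qed

lemma residual_orth:
  assumes "orthonormal I k b" "l < k"
  shows "ipI I (b l) (\<lambda>i. f i - (\<Sum>j<k. ipI I (b j) f * b j i)) = 0"
proof -
  have "ipI I (b l) (\<lambda>i. f i - (\<Sum>j<k. ipI I (b j) f * b j i))
      = ipI I (b l) f - (\<Sum>j<k. ipI I (b j) f * ipI I (b l) (b j))"
    by (rule ipI_right_lin)
  also have "(\<Sum>j<k. ipI I (b j) f * ipI I (b l) (b j)) = (\<Sum>j<k. ipI I (b j) f * (if j = l then 1 else 0))"
    using assms unfolding orthonormal_def by (intro sum.cong) auto
  also have "\<dots> = ipI I (b l) f" using assms(2) by (rule sum_delta_lt)
  finally show ?thesis by simp
qed

lemma bessel:
  assumes "orthonormal I k b"
  shows "(\<Sum>j<k. (cmod (ipI I (b j) f))^2) \<le> Re (ipI I f f)"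
proof -
  define r where "r = (\<lambda>i. f i - (\<Sum>j<k. ipI I (b j) f * b j i))"
  have "ipI I r r = ipI I f r - (\<Sum>j<k. cnj (ipI I (b j) f) * ipI I (b j) r)"
    unfolding r_def by (rule ipI_left_lin)
  also have "(\<Sum>j<k. cnj (ipI I (b j) f) * ipI I (b j) r) = 0"
  proof (intro sum.neutral ballI)
    fix j assume "j \<in> {..<k}"
    then have "ipI I (b j) r = 0" using residual_orth[OF assms, of j f] unfolding r_def by simp
    then show "cnj (ipI I (b j) f) * ipI I (b j) r = 0" by simp
  qed
  also have "ipI I f r = ipI I f f - (\<Sum>j<k. ipI I (b j) f * ipI I f (b j))"
    unfolding r_def by (rule ipI_right_lin)
  also have "(\<Sum>j<k. ipI I (b j) f * ipI I f (b j)) = of_real (\<Sum>j<k. (cmod (ipI I (b j) f))^2)"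
  proof -
    have "ipI I (b j) f * ipI I f (b j) = of_real ((cmod (ipI I (b j) f))^2)" for j
      unfolding complex_norm_square by (simp add: ipI_cnj[of I "b j" f, symmetric])
    then show ?thesis by simp
  qed
  finally have "ipI I r r = ipI I f f - of_real (\<Sum>j<k. (cmod (ipI I (b j) f))^2)" by simp
  moreover have "Re (ipI I r r) \<ge> 0" by (simp add: ipI_self sum_nonneg)
  ultimately show ?thesis by simp
qed

lemma orthonormal_bound:
  fixes I :: "'i set"
  assumes "finite I" "orthonormal I k b"
  shows "k \<le> card I"
proof -
  define e where "e = (\<lambda>(l::'i) (i::'i). if i = l then (1::complex) else 0)"
  have ipe: "ipI I (b j) (e l) = cnj (b j l)" if "l \<in> I" for j l
  proof -
    have "ipI I (b j) (e l) = (\<Sum>i\<in>I. if i = l then cnj (b j i) else 0)"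
      unfolding ipI_def e_def by (intro sum.cong) auto
    also have "\<dots> = cnj (b j l)" using that assms(1) by (subst sum.delta) auto
    finally show ?thesis .
  qed
  have ee: "Re (ipI I (e l) (e l)) = 1" if "l \<in> I" for l
  proof -
    have "ipI I (e l) (e l) = (\<Sum>i\<in>I. if i = l then 1 else 0)"
      unfolding ipI_def e_def by (intro sum.cong) auto
    also have "\<dots> = 1" using that assms(1) by (subst sum.delta) auto
    finally show ?thesis by simp
  qed
  have "(\<Sum>j<k. Re (ipI I (b j) (b j))) = (\<Sum>j<k. 1)"
    using assms(2) unfolding orthonormal_def by (intro sum.cong) auto
  then have "real k = (\<Sum>j<k. Re (ipI I (b j) (b j)))"
    by simp
  also have "\<dots> = (\<Sum>j<k. \<Sum>l\<in>I. (cmod (b j l))^2)"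
    unfolding ipI_self by simp
  also have "\<dots> = (\<Sum>l\<in>I. \<Sum>j<k. (cmod (b j l))^2)"
    by (rule sum.swap)
  also have "\<dots> = (\<Sum>l\<in>I. \<Sum>j<k. (cmod (ipI I (b j) (e l)))^2)"
    by (intro sum.cong refl) (simp add: ipe)
  also have "\<dots> \<le> (\<Sum>l\<in>I. Re (ipI I (e l) (e l)))"
    by (intro sum_mono bessel assms)
  also have "\<dots> = (\<Sum>l\<in>I. 1)"
    by (intro sum.cong refl) (simp add: ee)
  also have "\<dots> = real (card I)" by simp
  finally show ?thesis by linarith
qed

lemma ipI_cong: "(\<And>i. i \<in> I \<Longrightarrow> f i = f' i) \<Longrightarrow> (\<And>i. i \<in> I \<Longrightarrow> g i = g' i) \<Longrightarrow> ipI I f g = ipI I f' g'"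
  unfolding ipI_def by (intro sum.cong) auto

lemma ipI_scale_right: "ipI I f (\<lambda>i. c * g i) = c * ipI I f g"
  unfolding ipI_def by (simp add: sum_distrib_left mult.left_commute)

lemma ipI_scale_left: "ipI I (\<lambda>i. c * g i) f = cnj c * ipI I g f"
  unfolding ipI_def by (simp add: sum_distrib_left mult.assoc)

lemma onb_exists:
  fixes I :: "'i set" and co :: "'v \<Rightarrow> 'i \<Rightarrow> complex" and S :: "'v set" and addf :: "'v \<Rightarrow> 'v \<Rightarrow> 'v" and scf :: "complex \<Rightarrow> 'v \<Rightarrow> 'v"
  assumes finI: "finite I"
    and addS: "\<forall>x\<in>S. \<forall>y\<in>S. addf x y \<in> S"
    and scS: "\<forall>c. \<forall>x\<in>S. scf c x \<in> S"
    and co_add: "\<forall>x\<in>S. \<forall>y\<in>S. \<forall>i\<in>I. co (addf x y) i = co x i + co y i"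
    and co_sc: "\<forall>c. \<forall>x\<in>S. \<forall>i\<in>I. co (scf c x) i = c * co x i"
  shows "\<exists>bs. set bs \<subseteq> S \<and> orthonormal I (length bs) (\<lambda>j. co (bs ! j))
     \<and> (\<forall>x\<in>S. \<forall>i\<in>I. co x i = (\<Sum>j<length bs. ipI I (co (bs ! j)) (co x) * co (bs ! j) i))"
proof -
  define P where "P = (\<lambda>bs. set bs \<subseteq> S \<and> orthonormal I (length bs) (\<lambda>j. co (bs ! j)))"
  have P0: "P []" unfolding P_def orthonormal_def by simp
  have Pb: "\<forall>bs. P bs \<longrightarrow> length bs < card I + 1"
    using orthonormal_bound[OF finI] unfolding P_def by (auto simp: less_Suc_eq_le)
  obtain bs where Pbs: "P bs" and maxl: "\<forall>y. P y \<longrightarrow> length y \<le> length bs"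
    using ex_has_greatest_nat[of P "[]" length, OF P0 Pb] by blast
  let ?b = "\<lambda>j. co (bs ! j)"
  let ?k = "length bs"
  have bsS: "set bs \<subseteq> S" and orth: "orthonormal I ?k ?b" using Pbs unfolding P_def by auto
  have "\<forall>x\<in>S. \<forall>i\<in>I. co x i = (\<Sum>j<?k. ipI I (?b j) (co x) * ?b j i)"
  proof (rule ccontr)
    assume "\<not> ?thesis"
    then obtain x i0 where xS: "x \<in> S" and i0: "i0 \<in> I"
      and ne: "co x i0 \<noteq> (\<Sum>j<?k. ipI I (?b j) (co x) * ?b j i0)" by blast
    define R where "R = (\<lambda>i. co x i - (\<Sum>j<?k. ipI I (?b j) (co x) * ?b j i))"
    have "\<forall>m\<le>?k. \<exists>y\<in>S. \<forall>i\<in>I. co y i = co x i - (\<Sum>j<m. ipI I (?b j) (co x) * ?b j i)"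
    proof (intro allI impI)
      fix m assume "m \<le> ?k"
      then show "\<exists>y\<in>S. \<forall>i\<in>I. co y i = co x i - (\<Sum>j<m. ipI I (?b j) (co x) * ?b j i)"
      proof (induction m)
        case 0 then show ?case using xS by auto
      next
        case (Suc m)
        then obtain y where yS: "y \<in> S" and yc: "\<forall>i\<in>I. co y i = co x i - (\<Sum>j<m. ipI I (?b j) (co x) * ?b j i)"
          by auto
        have bm: "bs ! m \<in> S" using Suc.prems bsS by auto
        define y' where "y' = addf y (scf (- ipI I (?b m) (co x)) (bs ! m))"
        have y'S: "y' \<in> S" unfolding y'_def using addS scS yS bm by blast
        have "\<forall>i\<in>I. co y' i = co x i - (\<Sum>j<Suc m. ipI I (?b j) (co x) * ?b j i)"
        proof
          fix i assume "i \<in> I"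
          then show "co y' i = co x i - (\<Sum>j<Suc m. ipI I (?b j) (co x) * ?b j i)"
            unfolding y'_def using co_add co_sc scS yS bm yc by simp
        qed
        then show ?case using y'S by blast
      qed
    qed
    then obtain r where rS: "r \<in> S" and rc: "\<forall>i\<in>I. co r i = R i" unfolding R_def by auto
    have r_orth: "ipI I (?b l) (co r) = 0" if "l < ?k" for l
    proof -
      have "ipI I (?b l) (co r) = ipI I (?b l) R" by (rule ipI_cong) (auto simp: rc)
      also have "\<dots> = 0" unfolding R_def by (rule residual_orth[OF orth that])
      finally show ?thesis .
    qed
    define nu where "nu = sqrt (\<Sum>i\<in>I. (cmod (co r i))^2)"
    have "0 < (\<Sum>i\<in>I. (cmod (co r i))^2)"
    proof (rule sum_pos2[OF finI i0])
      show "0 < (cmod (co r i0))^2" using ne rc i0 unfolding R_def by auto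
    qed auto
    then have nupos: "nu > 0" and nu2: "nu^2 = (\<Sum>i\<in>I. (cmod (co r i))^2)"
      unfolding nu_def by auto
    define s where "s = scf (of_real (1 / nu)) r"
    have sS: "s \<in> S" unfolding s_def using scS rS by blast
    have cs: "ipI I f (co s) = of_real (1/nu) * ipI I f (co r)" for f
    proof -
      have "ipI I f (co s) = ipI I f (\<lambda>i. of_real (1/nu) * co r i)"
        by (rule ipI_cong) (auto simp: s_def co_sc rS)
      then show ?thesis by (simp only: ipI_scale_right)
    qed
    have ss: "ipI I (co s) (co s) = 1"
    proof -
      have "ipI I (co s) (co s) = ipI I (\<lambda>i. of_real (1/nu) * co r i) (\<lambda>i. of_real (1/nu) * co r i)"
        by (rule ipI_cong) (auto simp: s_def co_sc rS)
      also have "\<dots> = of_real (1/nu) * of_real (1/nu) * ipI I (co r) (co r)"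
        by (simp only: ipI_scale_right ipI_scale_left complex_cnj_complex_of_real mult.assoc)
      also have "ipI I (co r) (co r) = of_real (nu^2)" by (simp add: ipI_self nu2)
      also have "of_real (1/nu) * of_real (1/nu) * (of_real (nu^2) :: complex) = 1"
        using nupos by (simp add: power2_eq_square field_simps flip: of_real_mult)
      finally show ?thesis .
    qed
    have "P (bs @ [s])"
      unfolding P_def orthonormal_def
    proof (intro conjI allI impI)
      show "set (bs @ [s]) \<subseteq> S" using bsS sS by auto
      fix i j assume i: "i < length (bs @ [s])" and j: "j < length (bs @ [s])"
      show "ipI I (co ((bs @ [s]) ! i)) (co ((bs @ [s]) ! j)) = (if i = j then 1 else 0)"
      proof (cases "i < ?k")
        case True
        show ?thesis
        proof (cases "j < ?k")
          case True
          then show ?thesis using \<open>i < ?k\<close> orth unfolding orthonormal_def by (simp add: nth_append)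
        next
          case False
          then have "j = ?k" using j by simp
          then show ?thesis using \<open>i < ?k\<close> by (simp add: nth_append cs r_orth)
        qed
      next
        case False
        then have ik: "i = ?k" using i by simp
        show ?thesis
        proof (cases "j < ?k")
          case True
          have "ipI I (co s) (?b j) = cnj (ipI I (?b j) (co s))" by (simp add: ipI_cnj)
          also have "\<dots> = 0" by (simp add: cs r_orth True)
          finally show ?thesis using True ik by (simp add: nth_append)
        next
          case False
          then have "j = ?k" using j by simp
          then show ?thesis using ik by (simp add: nth_append ss)
        qed
      qed
    qed
    then show False using maxl by fastforce
  qed
  then show ?thesis using bsS orth by blast
qed


lemma lin_sum:
  assumes "\<forall>s\<in>T. y s = (\<Sum>j\<in>J. \<alpha> j * v j s)"
  shows "(\<Sum>s\<in>T. w s * y s) = (\<Sum>j\<in>J. (\<alpha> j :: complex) * (\<Sum>s\<in>T. w s * v j s))"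
proof -
  have "(\<Sum>s\<in>T. w s * y s) = (\<Sum>s\<in>T. \<Sum>j\<in>J. \<alpha> j * (w s * v j s))"
    using assms by (intro sum.cong refl) (simp add: sum_distrib_left mult.left_commute)
  also have "\<dots> = (\<Sum>j\<in>J. \<Sum>s\<in>T. \<alpha> j * (w s * v j s))" by (rule sum.swap)
  also have "\<dots> = (\<Sum>j\<in>J. \<alpha> j * (\<Sum>s\<in>T. w s * v j s))" by (simp add: sum_distrib_left)
  finally show ?thesis .
qed

definition rep_prop :: "'g set \<Rightarrow> ('g \<Rightarrow> 'g \<Rightarrow> 'g) \<Rightarrow> ('g \<Rightarrow> 'g) \<Rightarrow> 'x set \<Rightarrow> ('g \<Rightarrow> 'x \<Rightarrow> 'x \<Rightarrow> complex) \<Rightarrow> bool" where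
  "rep_prop G gm gi X K \<longleftrightarrow>
     (\<forall>g\<in>G. \<forall>h\<in>G. \<forall>x\<in>X. \<forall>z\<in>X. (\<Sum>y\<in>X. K g x y * K h y z) = K (gm g h) x z)
   \<and> (\<forall>g\<in>G. \<forall>x\<in>X. \<forall>y\<in>X. K (gi g) x y = cnj (K g y x))"

lemma rep_prop_cnj:
  assumes "rep_prop G gm gi X K"
  shows "rep_prop G gm gi X (\<lambda>g x y. cnj (K g x y))"
  unfolding rep_prop_def
proof (intro conjI ballI)
  fix g h x z assume "g \<in> G" "h \<in> G" "x \<in> X" "z \<in> X"
  have "(\<Sum>y\<in>X. cnj (K g x y) * cnj (K h y z)) = cnj (\<Sum>y\<in>X. K g x y * K h y z)"
    by (simp add: cnj_sum)
  then show "(\<Sum>y\<in>X. cnj (K g x y) * cnj (K h y z)) = cnj (K (gm g h) x z)"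
    using assms \<open>g \<in> G\<close> \<open>h \<in> G\<close> \<open>x \<in> X\<close> \<open>z \<in> X\<close> unfolding rep_prop_def by simp
next
  fix g x y assume "g \<in> G" "x \<in> X" "y \<in> X"
  then show "cnj (K (gi g) x y) = cnj (cnj (K g y x))"
    using assms unfolding rep_prop_def by simp
qed

lemma rep_prop_tensor:
  assumes "rep_prop G gm gi X1 K1" "rep_prop G gm gi X2 K2"
  shows "rep_prop G gm gi (X1 \<times> X2) (\<lambda>g x y. K1 g (fst x) (fst y) * K2 g (snd x) (snd y))"
  unfolding rep_prop_def
proof (intro conjI ballI)
  fix g h x z assume g: "g \<in> G" and h: "h \<in> G" and x: "x \<in> X1 \<times> X2" and z: "z \<in> X1 \<times> X2"
  have "(\<Sum>y\<in>X1 \<times> X2. K1 g (fst x) (fst y) * K2 g (snd x) (snd y) * (K1 h (fst y) (fst z) * K2 h (snd y) (snd z)))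
     = (\<Sum>y1\<in>X1. \<Sum>y2\<in>X2. (K1 g (fst x) y1 * K1 h y1 (fst z)) * (K2 g (snd x) y2 * K2 h y2 (snd z)))"
    by (simp add: sum.cartesian_product case_prod_unfold mult_ac)
  also have "\<dots> = (\<Sum>y1\<in>X1. K1 g (fst x) y1 * K1 h y1 (fst z)) * (\<Sum>y2\<in>X2. K2 g (snd x) y2 * K2 h y2 (snd z))"
    by (simp add: sum_product)
  also have "\<dots> = K1 (gm g h) (fst x) (fst z) * K2 (gm g h) (snd x) (snd z)"
    using assms g h x z unfolding rep_prop_def by auto
  finally show "(\<Sum>y\<in>X1 \<times> X2. K1 g (fst x) (fst y) * K2 g (snd x) (snd y) * (K1 h (fst y) (fst z) * K2 h (snd y) (snd z)))
     = K1 (gm g h) (fst x) (fst z) * K2 (gm g h) (snd x) (snd z)" .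
next
  fix g x y assume g: "g \<in> G" and x: "x \<in> X1 \<times> X2" and y: "y \<in> X1 \<times> X2"
  show "K1 (gi g) (fst x) (fst y) * K2 (gi g) (snd x) (snd y) = cnj (K1 g (fst y) (fst x) * K2 g (snd y) (snd x))"
    using assms g x y unfolding rep_prop_def by auto
qed

lemma avg_zero:
  fixes K :: "'g \<Rightarrow> 'x \<Rightarrow> 'x \<Rightarrow> complex"
  assumes finG: "finite G" and finX: "finite X" and neG: "G \<noteq> {}"
    and bm: "\<forall>g\<in>G. bij_betw (gm g) G G" and bi: "bij_betw gi G G"
    and rep: "rep_prop G gm gi X K"
    and tr: "(\<Sum>g\<in>G. \<Sum>x\<in>X. K g x x) = 0"
    and tinv: "\<forall>g\<in>G. \<forall>x\<in>X. (\<Sum>y\<in>X. K g x y * t y) = t x"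
  shows "\<forall>x\<in>X. t x = 0"
proof -
  define P where "P = (\<lambda>x z. \<Sum>g\<in>G. K g x z)"
  have cG: "of_nat (card G) \<noteq> (0::complex)" using finG neG by simp
  have PP: "(\<Sum>y\<in>X. P x y * P y z) = of_nat (card G) * P x z" if x: "x \<in> X" and z: "z \<in> X" for x z
  proof -
    have "(\<Sum>y\<in>X. P x y * P y z) = (\<Sum>y\<in>X. \<Sum>g\<in>G. \<Sum>h\<in>G. K g x y * K h y z)"
      unfolding P_def by (simp add: sum_product)
    also have "\<dots> = (\<Sum>g\<in>G. \<Sum>h\<in>G. \<Sum>y\<in>X. K g x y * K h y z)"
      by (simp add: sum.swap[of _ X])
    also have "\<dots> = (\<Sum>g\<in>G. \<Sum>h\<in>G. K (gm g h) x z)"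
      using rep x z unfolding rep_prop_def by (intro sum.cong refl) auto
    also have "\<dots> = (\<Sum>g\<in>G. \<Sum>h\<in>G. K h x z)"
    proof (rule sum.cong[OF refl])
      fix g assume "g \<in> G"
      then show "(\<Sum>h\<in>G. K (gm g h) x z) = (\<Sum>h\<in>G. K h x z)"
        using sum.reindex_bij_betw[OF bm[rule_format, OF \<open>g \<in> G\<close>], of "\<lambda>h. K h x z"] by simp
    qed
    also have "\<dots> = of_nat (card G) * P x z" unfolding P_def by simp
    finally show ?thesis .
  qed
  have Ph: "P x y = cnj (P y x)" if "x \<in> X" "y \<in> X" for x y
  proof -
    have "P x y = (\<Sum>g\<in>G. K (gi g) x y)"
      unfolding P_def using sum.reindex_bij_betw[OF bi, of "\<lambda>g. K g x y"] by simp
    also have "\<dots> = (\<Sum>g\<in>G. cnj (K g y x))"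
      using rep that unfolding rep_prop_def by (intro sum.cong refl) auto
    finally show ?thesis unfolding P_def by (simp flip: cnj_sum)
  qed
  have trP: "(\<Sum>x\<in>X. P x x) = 0"
    unfolding P_def using tr by (simp add: sum.swap[of _ X])
  have "of_nat (card G) * (\<Sum>x\<in>X. P x x) = (\<Sum>x\<in>X. \<Sum>y\<in>X. P x y * P y x)"
    by (simp add: sum_distrib_left PP)
  also have "\<dots> = (\<Sum>x\<in>X. \<Sum>y\<in>X. of_real ((cmod (P x y))^2))"
  proof (intro sum.cong refl)
    fix x y assume "x \<in> X" "y \<in> X"
    then show "P x y * P y x = of_real ((cmod (P x y))^2)"
      unfolding complex_norm_square using Ph[of y x] by simp
  qed
  finally have h: "of_nat (card G) * (\<Sum>x\<in>X. P x x) = (\<Sum>x\<in>X. \<Sum>y\<in>X. complex_of_real ((cmod (P x y))^2))" .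
  have h2: "complex_of_real (\<Sum>x\<in>X. \<Sum>y\<in>X. (cmod (P x y))^2) = (\<Sum>x\<in>X. \<Sum>y\<in>X. complex_of_real ((cmod (P x y))^2))"
    by (simp only: of_real_sum)
  have "complex_of_real (\<Sum>x\<in>X. \<Sum>y\<in>X. (cmod (P x y))^2) = 0"
    unfolding h2 h[symmetric] trP by simp
  then have "(\<Sum>x\<in>X. \<Sum>y\<in>X. (cmod (P x y))^2) = 0"
    by (simp only: of_real_eq_0_iff)
  then have P0: "P x y = 0" if "x \<in> X" "y \<in> X" for x y
    using that finX by (simp add: sum_nonneg_eq_0_iff sum_nonneg)
  show ?thesis
  proof
    fix x assume x: "x \<in> X"
    have "(\<Sum>y\<in>X. P x y * t y) = (\<Sum>g\<in>G. \<Sum>y\<in>X. K g x y * t y)"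
      unfolding P_def by (simp add: sum_distrib_right sum.swap[of _ X])
    also have "\<dots> = (\<Sum>g\<in>G. t x)" using tinv x by (intro sum.cong refl) auto
    finally have "of_nat (card G) * t x = 0" using P0 x by simp
    then show "t x = 0" using cG by simp
  qed
qed


lemma dim_cadj[simp]: "dim_row (cadj A) = dim_col A" "dim_col (cadj A) = dim_row A"
  unfolding cadj_def by auto

lemma cadj_index[simp]: "i < dim_col A \<Longrightarrow> j < dim_row A \<Longrightarrow> cadj A $$ (i,j) = cnj (A $$ (j,i))"
  unfolding cadj_def by auto

lemma cadj_carrier[simp]: "A \<in> carrier_mat r c \<Longrightarrow> cadj A \<in> carrier_mat c r"
  by auto

lemma cadj_cadj[simp]: "cadj (cadj A) = A"
  by (rule eq_matI) auto

lemma sum_vec_idx: "v \<bullet> w = (\<Sum>k<dim_vec w. v $ k * w $ k)"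
  unfolding scalar_prod_def by (simp add: atLeast0LessThan)

lemma mm_index:
  assumes "A \<in> carrier_mat N N" "B \<in> carrier_mat N N" "i < N" "j < N"
  shows "(A * B) $$ (i,j) = (\<Sum>k<N. A $$ (i,k) * B $$ (k,j))"
  using assms by (simp add: sum_vec_idx)

lemma mv_index:
  assumes "A \<in> carrier_mat N N" "v \<in> carrier_vec N" "i < N"
  shows "(A *\<^sub>v v) $ i = (\<Sum>k<N. A $$ (i,k) * v $ k)"
  using assms by (simp add: sum_vec_idx)

lemma cadj_mult:
  assumes "A \<in> carrier_mat N N" "B \<in> carrier_mat N N"
  shows "cadj (A * B) = cadj B * cadj A"
proof (rule eq_matI)
  fix i j assume "i < dim_row (cadj B * cadj A)" "j < dim_col (cadj B * cadj A)"
  then have ij: "i < N" "j < N" using assms by auto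
  have "cadj (A * B) $$ (i,j) = cnj ((A * B) $$ (j,i))" using assms ij by simp
  also have "\<dots> = (\<Sum>k<N. cnj (A $$ (j,k)) * cnj (B $$ (k,i)))"
    using mm_index[OF assms ij(2) ij(1)] by (simp add: cnj_sum)
  also have "\<dots> = (cadj B * cadj A) $$ (i,j)"
    using mm_index[of "cadj B" N "cadj A" i j] assms ij by (auto intro!: sum.cong simp: mult.commute)
  finally show "cadj (A * B) $$ (i,j) = (cadj B * cadj A) $$ (i,j)" .
qed (use assms in auto)

lemma cadj_one[simp]: "cadj (1\<^sub>m n) = 1\<^sub>m n"
  by (rule eq_matI) auto

lemma vinner_carrier:
  "\<phi> \<in> carrier_vec N \<Longrightarrow> vinner \<psi> \<phi> = (\<Sum>k<N. cnj (\<psi> $ k) * \<phi> $ k)"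
  unfolding vinner_def by simp

lemma minner_pair:
  "B \<in> carrier_mat N N \<Longrightarrow> minner A B = (\<Sum>pq\<in>{..<N}\<times>{..<N}. cnj (A $$ pq) * B $$ pq)"
  unfolding minner_def by (simp add: sum.cartesian_product case_prod_unfold)

lemma vinner_lin2:
  assumes "y \<in> carrier_vec N" "\<forall>j\<in>J. v j \<in> carrier_vec N"
    and "\<forall>k<N. y $ k = (\<Sum>j\<in>J. \<alpha> j * v j $ k)"
  shows "vinner x y = (\<Sum>j\<in>J. \<alpha> j * vinner x (v j))"
proof -
  have "vinner x y = (\<Sum>k<N. cnj (x $ k) * y $ k)" using assms by (simp add: vinner_carrier)
  also have "\<dots> = (\<Sum>j\<in>J. \<alpha> j * (\<Sum>k<N. cnj (x $ k) * v j $ k))"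
    by (rule lin_sum) (use assms in auto)
  also have "\<dots> = (\<Sum>j\<in>J. \<alpha> j * vinner x (v j))"
    using assms vinner_carrier[of "v _" N x] by (intro sum.cong refl) simp
  finally show ?thesis .
qed

lemma vinner_lin1:
  assumes "y \<in> carrier_vec N"
    and "\<forall>k<N. x $ k = (\<Sum>j\<in>J. \<alpha> j * v j $ k)"
  shows "vinner x y = (\<Sum>j\<in>J. cnj (\<alpha> j) * vinner (v j) y)"
proof -
  have "vinner x y = (\<Sum>k<N. y $ k * cnj (x $ k))" using assms by (simp add: vinner_carrier mult.commute)
  also have "\<dots> = (\<Sum>j\<in>J. cnj (\<alpha> j) * (\<Sum>k<N. y $ k * cnj (v j $ k)))"
    by (rule lin_sum) (use assms in \<open>auto simp: cnj_sum\<close>)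
  also have "\<dots> = (\<Sum>j\<in>J. cnj (\<alpha> j) * vinner (v j) y)"
    using assms by (intro sum.cong refl) (simp add: vinner_carrier mult.commute)
  finally show ?thesis .
qed

lemma minner_lin2:
  assumes "Y \<in> carrier_mat N N" "\<forall>j\<in>J. B j \<in> carrier_mat N N"
    and "\<forall>p<N. \<forall>q<N. Y $$ (p,q) = (\<Sum>j\<in>J. \<alpha> j * B j $$ (p,q))"
  shows "minner A Y = (\<Sum>j\<in>J. \<alpha> j * minner A (B j))"
proof -
  have "minner A Y = (\<Sum>pq\<in>{..<N}\<times>{..<N}. cnj (A $$ pq) * Y $$ pq)" using assms by (simp add: minner_pair)
  also have "\<dots> = (\<Sum>j\<in>J. \<alpha> j * (\<Sum>pq\<in>{..<N}\<times>{..<N}. cnj (A $$ pq) * B j $$ pq))"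
    by (rule lin_sum) (use assms in auto)
  also have "\<dots> = (\<Sum>j\<in>J. \<alpha> j * minner A (B j))"
    using assms minner_pair[of "B _" N A] by (intro sum.cong refl) simp
  finally show ?thesis .
qed

lemma lin_sum':
  assumes "\<forall>s\<in>T. y s = (\<Sum>j\<in>J. \<alpha> j * v j s)"
  shows "(\<Sum>s\<in>T. y s * w s) = (\<Sum>j\<in>J. (\<alpha> j :: complex) * (\<Sum>s\<in>T. v j s * w s))"
  using lin_sum[OF assms, of w] by (simp add: mult.commute)

lemma mv_lin:
  fixes A :: "complex mat"
  assumes "A \<in> carrier_mat N N" "y \<in> carrier_vec N" "\<forall>j\<in>J. v j \<in> carrier_vec N"
    and "\<forall>k<N. y $ k = (\<Sum>j\<in>J. \<alpha> j * v j $ k)"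
  shows "\<forall>i<N. (A *\<^sub>v y) $ i = (\<Sum>j\<in>J. \<alpha> j * (A *\<^sub>v v j) $ i)"
proof (intro allI impI)
  fix i assume i: "i < N"
  have "(A *\<^sub>v y) $ i = (\<Sum>k<N. A $$ (i,k) * y $ k)" using assms i by (intro mv_index)
  also have "\<dots> = (\<Sum>j\<in>J. \<alpha> j * (\<Sum>k<N. A $$ (i,k) * v j $ k))"
    using lin_sum[where T="{..<N}" and y="\<lambda>k. y $ k" and J=J and \<alpha>=\<alpha> and v="\<lambda>j k. v j $ k" and w="\<lambda>k. A $$ (i,k)"] assms
    by simp
  also have "\<dots> = (\<Sum>j\<in>J. \<alpha> j * (A *\<^sub>v v j) $ i)"
  proof (rule sum.cong[OF refl])
    fix j assume "j \<in> J"
    then show "\<alpha> j * (\<Sum>k<N. A $$ (i,k) * v j $ k) = \<alpha> j * (A *\<^sub>v v j) $ i"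
      using mv_index[of A N "v j" i] assms i by simp
  qed
  finally show "(A *\<^sub>v y) $ i = (\<Sum>j\<in>J. \<alpha> j * (A *\<^sub>v v j) $ i)" .
qed

lemma mv_lin_mat:
  fixes Y :: "complex mat"
  assumes "Y \<in> carrier_mat N N" "z \<in> carrier_vec N" "\<forall>j\<in>J. B j \<in> carrier_mat N N"
    and "\<forall>p<N. \<forall>q<N. Y $$ (p,q) = (\<Sum>j\<in>J. \<alpha> j * B j $$ (p,q))"
  shows "\<forall>i<N. (Y *\<^sub>v z) $ i = (\<Sum>j\<in>J. \<alpha> j * (B j *\<^sub>v z) $ i)"
proof (intro allI impI)
  fix i assume i: "i < N"
  have "(Y *\<^sub>v z) $ i = (\<Sum>k<N. Y $$ (i,k) * z $ k)" using mv_index[OF assms(1,2) i] .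
  also have "\<dots> = (\<Sum>j\<in>J. \<alpha> j * (\<Sum>k<N. B j $$ (i,k) * z $ k))"
    using lin_sum'[where T="{..<N}" and y="\<lambda>k. Y $$ (i,k)" and J=J and \<alpha>=\<alpha> and v="\<lambda>j k. B j $$ (i,k)" and w="\<lambda>k. z $ k"] assms i
    by simp
  also have "\<dots> = (\<Sum>j\<in>J. \<alpha> j * (B j *\<^sub>v z) $ i)"
  proof (rule sum.cong[OF refl])
    fix j assume "j \<in> J"
    then show "\<alpha> j * (\<Sum>k<N. B j $$ (i,k) * z $ k) = \<alpha> j * (B j *\<^sub>v z) $ i"
      using mv_index[of "B j" N z i] assms i by simp
  qed
  finally show "(Y *\<^sub>v z) $ i = (\<Sum>j\<in>J. \<alpha> j * (B j *\<^sub>v z) $ i)" .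
qed

lemma lm_lin:
  fixes Y :: "complex mat"
  assumes "M \<in> carrier_mat N N" "Y \<in> carrier_mat N N" "\<forall>j\<in>J. B j \<in> carrier_mat N N"
    and "\<forall>p<N. \<forall>q<N. Y $$ (p,q) = (\<Sum>j\<in>J. \<alpha> j * B j $$ (p,q))"
  shows "\<forall>p<N. \<forall>q<N. (M * Y) $$ (p,q) = (\<Sum>j\<in>J. \<alpha> j * (M * B j) $$ (p,q))"
proof (intro allI impI)
  fix p q assume pq: "p < N" "q < N"
  have "(M * Y) $$ (p,q) = (\<Sum>k<N. M $$ (p,k) * Y $$ (k,q))" using assms pq by (intro mm_index)
  also have "\<dots> = (\<Sum>j\<in>J. \<alpha> j * (\<Sum>k<N. M $$ (p,k) * B j $$ (k,q)))"
    using lin_sum[where T="{..<N}" and y="\<lambda>k. Y $$ (k,q)" and J=J and \<alpha>=\<alpha> and v="\<lambda>j k. B j $$ (k,q)" and w="\<lambda>k. M $$ (p,k)"] assms pq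
    by simp
  also have "\<dots> = (\<Sum>j\<in>J. \<alpha> j * (M * B j) $$ (p,q))"
  proof (rule sum.cong[OF refl])
    fix j assume "j \<in> J"
    then show "\<alpha> j * (\<Sum>k<N. M $$ (p,k) * B j $$ (k,q)) = \<alpha> j * (M * B j) $$ (p,q)"
      using mm_index[of M N "B j" p q] assms pq by simp
  qed
  finally show "(M * Y) $$ (p,q) = (\<Sum>j\<in>J. \<alpha> j * (M * B j) $$ (p,q))" .
qed

lemma rm_lin:
  fixes Y :: "complex mat"
  assumes "M \<in> carrier_mat N N" "Y \<in> carrier_mat N N" "\<forall>j\<in>J. B j \<in> carrier_mat N N"
    and "\<forall>p<N. \<forall>q<N. Y $$ (p,q) = (\<Sum>j\<in>J. \<alpha> j * B j $$ (p,q))"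
  shows "\<forall>p<N. \<forall>q<N. (Y * M) $$ (p,q) = (\<Sum>j\<in>J. \<alpha> j * (B j * M) $$ (p,q))"
proof (intro allI impI)
  fix p q assume pq: "p < N" "q < N"
  have "(Y * M) $$ (p,q) = (\<Sum>k<N. Y $$ (p,k) * M $$ (k,q))" using mm_index[OF assms(2,1) pq] .
  also have "\<dots> = (\<Sum>j\<in>J. \<alpha> j * (\<Sum>k<N. B j $$ (p,k) * M $$ (k,q)))"
    using lin_sum'[where T="{..<N}" and y="\<lambda>k. Y $$ (p,k)" and J=J and \<alpha>=\<alpha> and v="\<lambda>j k. B j $$ (p,k)" and w="\<lambda>k. M $$ (k,q)"] assms pq
    by simp
  also have "\<dots> = (\<Sum>j\<in>J. \<alpha> j * (B j * M) $$ (p,q))"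
  proof (rule sum.cong[OF refl])
    fix j assume "j \<in> J"
    then show "\<alpha> j * (\<Sum>k<N. B j $$ (p,k) * M $$ (k,q)) = \<alpha> j * (B j * M) $$ (p,q)"
      using mm_index[of "B j" N M p q] assms pq by simp
  qed
  finally show "(Y * M) $$ (p,q) = (\<Sum>j\<in>J. \<alpha> j * (B j * M) $$ (p,q))" .
qed

lemma conj_lin:
  fixes Y :: "complex mat"
  assumes "M \<in> carrier_mat N N" "M' \<in> carrier_mat N N" "Y \<in> carrier_mat N N" "\<forall>j\<in>J. B j \<in> carrier_mat N N"
    and "\<forall>p<N. \<forall>q<N. Y $$ (p,q) = (\<Sum>j\<in>J. \<alpha> j * B j $$ (p,q))"
  shows "\<forall>p<N. \<forall>q<N. (M * Y * M') $$ (p,q) = (\<Sum>j\<in>J. \<alpha> j * (M * B j * M') $$ (p,q))"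
proof -
  have "\<forall>p<N. \<forall>q<N. (M * Y) $$ (p,q) = (\<Sum>j\<in>J. \<alpha> j * (M * B j) $$ (p,q))"
    by (rule lm_lin) (use assms in auto)
  then show ?thesis
    by (intro rm_lin[where B="\<lambda>j. M * B j"]) (use assms in auto)
qed

lemma vinner_adj:
  assumes "A \<in> carrier_mat N N" "a \<in> carrier_vec N" "b \<in> carrier_vec N"
  shows "vinner (cadj A *\<^sub>v a) b = vinner a (A *\<^sub>v b)"
proof -
  have e1: "(cadj A *\<^sub>v a) $ k = (\<Sum>s<N. cnj (A $$ (s,k)) * a $ s)" if "k < N" for k
    using mv_index[of "cadj A" N a k] assms that by simp
  have e2: "(A *\<^sub>v b) $ s = (\<Sum>k<N. A $$ (s,k) * b $ k)" if "s < N" for s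
    using mv_index[of A N b s] assms that by simp
  have "vinner (cadj A *\<^sub>v a) b = (\<Sum>k<N. cnj ((cadj A *\<^sub>v a) $ k) * b $ k)"
    using assms by (intro vinner_carrier) auto
  also have "\<dots> = (\<Sum>k<N. \<Sum>s<N. cnj (a $ s) * (A $$ (s,k) * b $ k))"
    by (intro sum.cong refl) (simp add: e1 cnj_sum sum_distrib_right sum_distrib_left mult_ac)
  also have "\<dots> = (\<Sum>s<N. \<Sum>k<N. cnj (a $ s) * (A $$ (s,k) * b $ k))" by (rule sum.swap)
  also have "\<dots> = (\<Sum>s<N. cnj (a $ s) * (A *\<^sub>v b) $ s)"
    by (intro sum.cong refl) (simp add: e2 sum_distrib_left)
  also have "\<dots> = vinner a (A *\<^sub>v b)"
    using assms by (intro vinner_carrier[symmetric]) auto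
  finally show ?thesis .
qed

lemma vinner_sym:
  assumes "x \<in> carrier_vec N" "y \<in> carrier_vec N"
  shows "vinner x y = cnj (vinner y x)"
  using assms by (simp add: vinner_carrier cnj_sum mult.commute)

lemma vinner_adj2:
  assumes "A \<in> carrier_mat N N" "a \<in> carrier_vec N" "b \<in> carrier_vec N"
  shows "vinner a (cadj A *\<^sub>v b) = cnj (vinner b (A *\<^sub>v a))"
proof -
  have "vinner a (cadj A *\<^sub>v b) = cnj (vinner (cadj A *\<^sub>v b) a)"
    using assms cadj_carrier[OF assms(1)] by (intro vinner_sym[of _ N] mult_mat_vec_carrier) auto
  also have "vinner (cadj A *\<^sub>v b) a = vinner b (A *\<^sub>v a)"
    by (rule vinner_adj[OF assms(1,3,2)])
  finally show ?thesis .
qed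

lemma trip_index:
  assumes "M \<in> carrier_mat N N" "Y \<in> carrier_mat N N" "M' \<in> carrier_mat N N" "r < N" "s < N"
  shows "(M * Y * M') $$ (r,s) = (\<Sum>pq\<in>{..<N}\<times>{..<N}. M $$ (r, fst pq) * Y $$ pq * M' $$ (snd pq, s))"
proof -
  have MY: "M * Y \<in> carrier_mat N N" using assms by auto
  have "(M * Y * M') $$ (r,s) = (\<Sum>q<N. (M * Y) $$ (r,q) * M' $$ (q,s))"
    using mm_index[OF MY assms(3,4,5)] .
  also have "\<dots> = (\<Sum>q<N. \<Sum>p<N. M $$ (r,p) * Y $$ (p,q) * M' $$ (q,s))"
  proof (rule sum.cong[OF refl])
    fix q assume "q \<in> {..<N}"
    then show "(M * Y) $$ (r,q) * M' $$ (q,s) = (\<Sum>p<N. M $$ (r,p) * Y $$ (p,q) * M' $$ (q,s))"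
      using mm_index[OF assms(1,2) assms(4), of q] by (simp add: sum_distrib_right)
  qed
  also have "\<dots> = (\<Sum>p<N. \<Sum>q<N. M $$ (r,p) * Y $$ (p,q) * M' $$ (q,s))" by (rule sum.swap)
  also have "\<dots> = (\<Sum>pq\<in>{..<N}\<times>{..<N}. M $$ (r, fst pq) * Y $$ pq * M' $$ (snd pq, s))"
    by (simp add: sum.cartesian_product case_prod_unfold)
  finally show ?thesis .
qed

lemma minner_adj:
  assumes "A \<in> carrier_mat N N" "B \<in> carrier_mat N N" "U \<in> carrier_mat N N"
  shows "minner A (cadj U * B * U) = cnj (minner B (U * A * cadj U))"
proof -
  let ?I = "{..<N}\<times>{..<N}"
  have cU: "cadj U \<in> carrier_mat N N" using assms by auto
  have e1: "(cadj U * B * U) $$ rs = (\<Sum>pq\<in>?I. cnj (U $$ (fst pq, fst rs)) * B $$ pq * U $$ (snd pq, snd rs))"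
    if "rs \<in> ?I" for rs
  proof -
    have "(cadj U * B * U) $$ rs = (cadj U * B * U) $$ (fst rs, snd rs)" by simp
    also have "\<dots> = (\<Sum>pq\<in>?I. cadj U $$ (fst rs, fst pq) * B $$ pq * U $$ (snd pq, snd rs))"
      using that by (intro trip_index[OF cU assms(2,3)]) auto
    also have "\<dots> = (\<Sum>pq\<in>?I. cnj (U $$ (fst pq, fst rs)) * B $$ pq * U $$ (snd pq, snd rs))"
      using that assms by (intro sum.cong[OF refl]) auto
    finally show ?thesis .
  qed
  have e2: "(U * A * cadj U) $$ pq = (\<Sum>rs\<in>?I. U $$ (fst pq, fst rs) * A $$ rs * cnj (U $$ (snd pq, snd rs)))"
    if "pq \<in> ?I" for pq
  proof -
    have "(U * A * cadj U) $$ pq = (U * A * cadj U) $$ (fst pq, snd pq)" by simp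
    also have "\<dots> = (\<Sum>rs\<in>?I. U $$ (fst pq, fst rs) * A $$ rs * cadj U $$ (snd rs, snd pq))"
      using that by (intro trip_index[OF assms(3,1) cU]) auto
    also have "\<dots> = (\<Sum>rs\<in>?I. U $$ (fst pq, fst rs) * A $$ rs * cnj (U $$ (snd pq, snd rs)))"
      using that assms by (intro sum.cong refl) auto
    finally show ?thesis .
  qed
  have "minner A (cadj U * B * U) = (\<Sum>rs\<in>?I. cnj (A $$ rs) * (cadj U * B * U) $$ rs)"
    using assms by (intro minner_pair) auto
  also have "\<dots> = (\<Sum>rs\<in>?I. \<Sum>pq\<in>?I. cnj (A $$ rs) * (cnj (U $$ (fst pq, fst rs)) * B $$ pq * U $$ (snd pq, snd rs)))"
  proof (rule sum.cong[OF refl])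
    fix rs assume "rs \<in> ?I"
    then show "cnj (A $$ rs) * (cadj U * B * U) $$ rs = (\<Sum>pq\<in>?I. cnj (A $$ rs) * (cnj (U $$ (fst pq, fst rs)) * B $$ pq * U $$ (snd pq, snd rs)))"
      by (simp only: e1 sum_distrib_left)
  qed
  also have "\<dots> = (\<Sum>pq\<in>?I. \<Sum>rs\<in>?I. cnj (A $$ rs) * (cnj (U $$ (fst pq, fst rs)) * B $$ pq * U $$ (snd pq, snd rs)))"
    by (rule sum.swap)
  also have "\<dots> = (\<Sum>pq\<in>?I. cnj (cnj (B $$ pq) * (U * A * cadj U) $$ pq))"
  proof (rule sum.cong[OF refl])
    fix pq assume pq: "pq \<in> ?I"
    have "cnj (cnj (B $$ pq) * (U * A * cadj U) $$ pq) = B $$ pq * cnj (\<Sum>rs\<in>?I. U $$ (fst pq, fst rs) * A $$ rs * cnj (U $$ (snd pq, snd rs)))"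
      by (simp only: e2[OF pq] complex_cnj_mult complex_cnj_cnj)
    also have "\<dots> = (\<Sum>rs\<in>?I. B $$ pq * (cnj (U $$ (fst pq, fst rs)) * cnj (A $$ rs) * U $$ (snd pq, snd rs)))"
      by (simp only: cnj_sum complex_cnj_mult complex_cnj_cnj sum_distrib_left)
    also have "\<dots> = (\<Sum>rs\<in>?I. cnj (A $$ rs) * (cnj (U $$ (fst pq, fst rs)) * B $$ pq * U $$ (snd pq, snd rs)))"
      by (rule sum.cong[OF refl]) (simp only: mult_ac)
    finally show "(\<Sum>rs\<in>?I. cnj (A $$ rs) * (cnj (U $$ (fst pq, fst rs)) * B $$ pq * U $$ (snd pq, snd rs))) = cnj (cnj (B $$ pq) * (U * A * cadj U) $$ pq)" by (rule sym)
  qed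
  also have "\<dots> = cnj (minner B (U * A * cadj U))"
  proof -
    have "U * A * cadj U \<in> carrier_mat N N" using assms cU by auto
    from minner_pair[OF this, of B] show ?thesis by (simp add: cnj_sum)
  qed
  finally show ?thesis .
qed


lemma tp_carrier[simp]: "tensor_pow q n U \<in> carrier_mat (q ^ n) (q ^ n)"
  unfolding tensor_pow_def by simp

lemma tp_dim[simp]: "dim_row (tensor_pow q n U) = q ^ n" "dim_col (tensor_pow q n U) = q ^ n"
  unfolding tensor_pow_def by simp_all

lemma tp_index:
  "i < q ^ n \<Longrightarrow> j < q ^ n \<Longrightarrow> tensor_pow q n U $$ (i,j) = (\<Prod>k<n. U $$ (digit q k i, digit q k j))"
  unfolding tensor_pow_def by simp

lemma digit_Suc: "digit q (Suc k) i = digit q k (i div q)"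
  unfolding digit_def by (simp add: div_mult2_eq)

lemma digit_0: "digit q 0 i = i mod q"
  unfolding digit_def by simp

lemma div_less_pow:
  fixes i q n :: nat
  assumes "i < q ^ Suc n"
  shows "i div q < q ^ n"
  using assms by (intro less_mult_imp_div_less) (simp add: mult.commute)

lemma tp_Suc:
  assumes "i < q ^ Suc n" "j < q ^ Suc n"
  shows "tensor_pow q (Suc n) U $$ (i,j) = U $$ (i mod q, j mod q) * tensor_pow q n U $$ (i div q, j div q)"
proof -
  have "tensor_pow q (Suc n) U $$ (i,j) = (\<Prod>k<Suc n. U $$ (digit q k i, digit q k j))"
    using assms by (rule tp_index)
  also have "\<dots> = U $$ (i mod q, j mod q) * (\<Prod>k<n. U $$ (digit q k (i div q), digit q k (j div q)))"
    by (subst prod.lessThan_Suc_shift) (simp add: digit_Suc digit_0)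
  also have "(\<Prod>k<n. U $$ (digit q k (i div q), digit q k (j div q))) = tensor_pow q n U $$ (i div q, j div q)"
    using assms by (intro tp_index[symmetric] div_less_pow)
  finally show ?thesis .
qed

lemma sum_divmod:
  fixes q M :: nat
  assumes "0 < q"
  shows "(\<Sum>m<q * M. f m) = (\<Sum>l<q. \<Sum>m'<M. f (l + q * m'))"
proof -
  have bij: "bij_betw (\<lambda>x. fst x + q * snd x) ({..<q} \<times> {..<M}) {..<q * M}"
  proof (rule bij_betw_byWitness[where f'="\<lambda>m. (m mod q, m div q)"])
    show "\<forall>a\<in>{..<q} \<times> {..<M}. ((fst a + q * snd a) mod q, (fst a + q * snd a) div q) = a"
      using assms by auto
    show "\<forall>a'\<in>{..<q * M}. fst (a' mod q, a' div q) + q * snd (a' mod q, a' div q) = a'"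
      by simp
    show "(\<lambda>x. fst x + q * snd x) ` ({..<q} \<times> {..<M}) \<subseteq> {..<q * M}"
    proof
      fix m assume "m \<in> (\<lambda>x. fst x + q * snd x) ` ({..<q} \<times> {..<M})"
      then obtain l m' where "l < q" "m' < M" "m = l + q * m'" by auto
      then have "m < q + q * m'" by simp
      also have "\<dots> = q * Suc m'" by simp
      also have "\<dots> \<le> q * M" using \<open>m' < M\<close> by (intro mult_le_mono2) simp
      finally show "m \<in> {..<q * M}" by simp
    qed
    show "(\<lambda>m. (m mod q, m div q)) ` {..<q * M} \<subseteq> {..<q} \<times> {..<M}"
      using assms by (auto simp: less_mult_imp_div_less mult.commute)
  qed
  have "(\<Sum>m<q * M. f m) = (\<Sum>x\<in>{..<q} \<times> {..<M}. f (fst x + q * snd x))"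
    using sum.reindex_bij_betw[OF bij, of f] by simp
  also have "\<dots> = (\<Sum>l<q. \<Sum>m'<M. f (l + q * m'))"
    by (simp add: sum.cartesian_product case_prod_unfold)
  finally show ?thesis .
qed

lemma tp_mult:
  assumes "0 < q" "A \<in> carrier_mat q q" "B \<in> carrier_mat q q"
  shows "tensor_pow q n (A * B) = tensor_pow q n A * tensor_pow q n B"
proof (induction n)
  case 0
  show ?case
  proof (rule eq_matI)
    fix i j assume "i < dim_row (tensor_pow q 0 A * tensor_pow q 0 B)" "j < dim_col (tensor_pow q 0 A * tensor_pow q 0 B)"
    then have "i = 0" "j = 0" by (auto simp: tensor_pow_def)
    then show "tensor_pow q 0 (A * B) $$ (i, j) = (tensor_pow q 0 A * tensor_pow q 0 B) $$ (i, j)"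
      by (simp add: tensor_pow_def sum_vec_idx)
  qed (auto simp: tensor_pow_def)
next
  case (Suc n)
  show ?case
  proof (rule eq_matI)
    fix i j assume "i < dim_row (tensor_pow q (Suc n) A * tensor_pow q (Suc n) B)"
      "j < dim_col (tensor_pow q (Suc n) A * tensor_pow q (Suc n) B)"
    then have i: "i < q ^ Suc n" and j: "j < q ^ Suc n" by auto
    have im: "i mod q < q" "j mod q < q" using assms by auto
    have id: "i div q < q ^ n" "j div q < q ^ n" using i j by (auto intro: div_less_pow)
    have "tensor_pow q (Suc n) (A * B) $$ (i, j)
        = (A * B) $$ (i mod q, j mod q) * (tensor_pow q n A * tensor_pow q n B) $$ (i div q, j div q)"
      using i j by (simp add: tp_Suc Suc.IH)
    also have "\<dots> = (\<Sum>l<q. A $$ (i mod q, l) * B $$ (l, j mod q)) *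
        (\<Sum>m'<q ^ n. tensor_pow q n A $$ (i div q, m') * tensor_pow q n B $$ (m', j div q))"
      using mm_index[OF assms(2,3) im] mm_index[OF tp_carrier tp_carrier id] by simp
    also have "\<dots> = (\<Sum>l<q. \<Sum>m'<q ^ n. (A $$ (i mod q, l) * tensor_pow q n A $$ (i div q, m'))
        * (B $$ (l, j mod q) * tensor_pow q n B $$ (m', j div q)))"
      by (simp add: sum_product mult_ac)
    also have "\<dots> = (\<Sum>l<q. \<Sum>m'<q ^ n. tensor_pow q (Suc n) A $$ (i, l + q * m') * tensor_pow q (Suc n) B $$ (l + q * m', j))"
    proof (intro sum.cong refl)
      fix l m' assume l: "l \<in> {..<q}" and m': "m' \<in> {..<q ^ n}"
      have lm: "l + q * m' < q ^ Suc n"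
      proof -
        have "l + q * m' < q + q * m'" using l by simp
        also have "\<dots> = q * Suc m'" by simp
        also have "\<dots> \<le> q * q ^ n" using m' by (intro mult_le_mono2) simp
        finally show ?thesis by simp
      qed
      have "(l + q * m') mod q = l" "(l + q * m') div q = m'" using l assms by auto
      then show "(A $$ (i mod q, l) * tensor_pow q n A $$ (i div q, m')) * (B $$ (l, j mod q) * tensor_pow q n B $$ (m', j div q))
        = tensor_pow q (Suc n) A $$ (i, l + q * m') * tensor_pow q (Suc n) B $$ (l + q * m', j)"
        using i j lm by (simp add: tp_Suc)
    qed
    also have "\<dots> = (\<Sum>m<q * q ^ n. tensor_pow q (Suc n) A $$ (i, m) * tensor_pow q (Suc n) B $$ (m, j))"
      by (rule sum_divmod[OF assms(1), of "\<lambda>m. tensor_pow q (Suc n) A $$ (i, m) * tensor_pow q (Suc n) B $$ (m, j)" "q ^ n", symmetric])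
    also have "\<dots> = (tensor_pow q (Suc n) A * tensor_pow q (Suc n) B) $$ (i, j)"
      using mm_index[OF tp_carrier tp_carrier i j, of A B] by simp
    finally show "tensor_pow q (Suc n) (A * B) $$ (i, j) = (tensor_pow q (Suc n) A * tensor_pow q (Suc n) B) $$ (i, j)" .
  qed auto
qed

lemma tp_one:
  assumes "0 < q"
  shows "tensor_pow q n (1\<^sub>m q) = 1\<^sub>m (q ^ n)"
proof (induction n)
  case 0
  show ?case by (rule eq_matI) (auto simp: tensor_pow_def)
next
  case (Suc n)
  show ?case
  proof (rule eq_matI)
    fix i j assume "i < dim_row (1\<^sub>m (q ^ Suc n))" "j < dim_col (1\<^sub>m (q ^ Suc n) :: complex mat)"
    then have i: "i < q ^ Suc n" and j: "j < q ^ Suc n" by auto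
    have id: "i div q < q ^ n" "j div q < q ^ n" using i j by (auto intro: div_less_pow)
    have "(i mod q = j mod q \<and> i div q = j div q) \<longleftrightarrow> i = j"
      by (metis div_mult_mod_eq)
    then show "tensor_pow q (Suc n) (1\<^sub>m q) $$ (i, j) = 1\<^sub>m (q ^ Suc n) $$ (i, j)"
      using i j id assms by (auto simp: tp_Suc Suc.IH)
  qed auto
qed

lemma tp_cadj:
  assumes "U \<in> carrier_mat q q" "0 < q"
  shows "tensor_pow q n (cadj U) = cadj (tensor_pow q n U)"
proof (rule eq_matI)
  fix i j assume "i < dim_row (cadj (tensor_pow q n U))" "j < dim_col (cadj (tensor_pow q n U))"
  then have i: "i < q ^ n" and j: "j < q ^ n" by auto
  have "digit q k i < q" "digit q k j < q" for k unfolding digit_def using assms by auto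
  then show "tensor_pow q n (cadj U) $$ (i, j) = cadj (tensor_pow q n U) $$ (i, j)"
    using i j assms by (simp add: tp_index cnj_prod)
qed auto


lemma vonb_exists:
  assumes "vsubspace N S"
  shows "\<exists>bs. vonb N S bs"
proof -
  have Ssub: "S \<subseteq> carrier_vec N" and addS: "\<forall>x\<in>S. \<forall>y\<in>S. x + y \<in> S" and scS: "\<forall>c. \<forall>x\<in>S. c \<cdot>\<^sub>v x \<in> S"
    using assms unfolding vsubspace_def by auto
  have "\<exists>bs. set bs \<subseteq> S \<and> orthonormal {..<N} (length bs) (\<lambda>j k. (bs ! j) $ k)
     \<and> (\<forall>x\<in>S. \<forall>i\<in>{..<N}. x $ i = (\<Sum>j<length bs. ipI {..<N} (\<lambda>k. (bs ! j) $ k) (\<lambda>k. x $ k) * (bs ! j) $ i))"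
  proof (rule onb_exists[where addf="(+)" and scf="\<lambda>c x. c \<cdot>\<^sub>v x"])
    show "finite {..<N}" by simp
    show "\<forall>x\<in>S. \<forall>y\<in>S. x + y \<in> S" by (fact addS)
    show "\<forall>c. \<forall>x\<in>S. c \<cdot>\<^sub>v x \<in> S" by (fact scS)
    show "\<forall>x\<in>S. \<forall>y\<in>S. \<forall>i\<in>{..<N}. (x + y) $ i = x $ i + y $ i"
    proof (intro ballI)
      fix x y i assume "x \<in> S" "y \<in> S" "i \<in> {..<N}"
      moreover have "dim_vec y = N" using \<open>y \<in> S\<close> Ssub by auto
      ultimately show "(x + y) $ i = x $ i + y $ i" by simp
    qed
    show "\<forall>c. \<forall>x\<in>S. \<forall>i\<in>{..<N}. (c \<cdot>\<^sub>v x) $ i = c * x $ i"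
    proof (intro allI ballI)
      fix c x i assume "x \<in> S" "i \<in> {..<N}"
      moreover have "dim_vec x = N" using \<open>x \<in> S\<close> Ssub by auto
      ultimately show "(c \<cdot>\<^sub>v x) $ i = c * x $ i" by simp
    qed
  qed
  then obtain bs where bsS: "set bs \<subseteq> S" and orth: "orthonormal {..<N} (length bs) (\<lambda>j k. (bs ! j) $ k)"
    and ex: "\<forall>x\<in>S. \<forall>i\<in>{..<N}. x $ i = (\<Sum>j<length bs. ipI {..<N} (\<lambda>k. (bs ! j) $ k) (\<lambda>k. x $ k) * (bs ! j) $ i)"
    by blast
  have ip: "vinner a b = ipI {..<N} (\<lambda>k. a $ k) (\<lambda>k. b $ k)" if "b \<in> S" for a b
    using that Ssub unfolding vinner_def ipI_def by auto
  have "vonb N S bs"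
    unfolding vonb_def
  proof (intro conjI)
    show "set bs \<subseteq> S" by (fact bsS)
    show "\<forall>i<length bs. \<forall>j<length bs. vinner (bs ! i) (bs ! j) = (if i = j then 1 else 0)"
    proof (intro allI impI)
      fix i j assume "i < length bs" "j < length bs"
      then have "bs ! j \<in> S" using bsS nth_mem by blast
      then show "vinner (bs ! i) (bs ! j) = (if i = j then 1 else 0)"
        using orth \<open>i < length bs\<close> \<open>j < length bs\<close> unfolding orthonormal_def ip[OF \<open>bs ! j \<in> S\<close>] by blast
    qed
    show "\<forall>x\<in>S. \<forall>k<N. x $ k = (\<Sum>i<length bs. vinner (bs ! i) x * bs ! i $ k)"
    proof (intro ballI allI impI)
      fix x k assume "x \<in> S" "k < N"
      then show "x $ k = (\<Sum>i<length bs. vinner (bs ! i) x * bs ! i $ k)"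
        using ex unfolding ip[OF \<open>x \<in> S\<close>] by blast
    qed
  qed
  then show ?thesis by blast
qed

lemma monb_exists:
  assumes "msubspace N S"
  shows "\<exists>bs. monb N S bs"
proof -
  have Ssub: "S \<subseteq> carrier_mat N N" and addS: "\<forall>x\<in>S. \<forall>y\<in>S. x + y \<in> S" and scS: "\<forall>c. \<forall>x\<in>S. c \<cdot>\<^sub>m x \<in> S"
    using assms unfolding msubspace_def by auto
  let ?I = "{..<N} \<times> {..<N}"
  have "\<exists>bs. set bs \<subseteq> S \<and> orthonormal ?I (length bs) (\<lambda>j k. (bs ! j) $$ k)
     \<and> (\<forall>x\<in>S. \<forall>i\<in>?I. x $$ i = (\<Sum>j<length bs. ipI ?I (\<lambda>k. (bs ! j) $$ k) (\<lambda>k. x $$ k) * (bs ! j) $$ i))"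
  proof (rule onb_exists[where addf="(+)" and scf="\<lambda>c x. c \<cdot>\<^sub>m x"])
    show "finite ?I" by simp
    show "\<forall>x\<in>S. \<forall>y\<in>S. x + y \<in> S" by (fact addS)
    show "\<forall>c. \<forall>x\<in>S. c \<cdot>\<^sub>m x \<in> S" by (fact scS)
    show "\<forall>x\<in>S. \<forall>y\<in>S. \<forall>i\<in>?I. (x + y) $$ i = x $$ i + y $$ i"
    proof (intro ballI)
      fix x y i assume "x \<in> S" "y \<in> S" "i \<in> ?I"
      moreover have "dim_row y = N" "dim_col y = N" using \<open>y \<in> S\<close> Ssub by auto
      ultimately show "(x + y) $$ i = x $$ i + y $$ i" by (cases i) simp
    qed
    show "\<forall>c. \<forall>x\<in>S. \<forall>i\<in>?I. (c \<cdot>\<^sub>m x) $$ i = c * x $$ i"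
    proof (intro allI ballI)
      fix c x i assume "x \<in> S" "i \<in> ?I"
      moreover have "dim_row x = N" "dim_col x = N" using \<open>x \<in> S\<close> Ssub by auto
      ultimately show "(c \<cdot>\<^sub>m x) $$ i = c * x $$ i" by (cases i) simp
    qed
  qed
  then obtain bs where bsS: "set bs \<subseteq> S" and orth: "orthonormal ?I (length bs) (\<lambda>j k. (bs ! j) $$ k)"
    and ex: "\<forall>x\<in>S. \<forall>i\<in>?I. x $$ i = (\<Sum>j<length bs. ipI ?I (\<lambda>k. (bs ! j) $$ k) (\<lambda>k. x $$ k) * (bs ! j) $$ i)"
    by blast
  have ip: "minner a b = ipI ?I (\<lambda>k. a $$ k) (\<lambda>k. b $$ k)" if "b \<in> S" for a b
    using that Ssub minner_pair[of b N a] unfolding ipI_def by auto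
  have "monb N S bs"
    unfolding monb_def
  proof (intro conjI)
    show "set bs \<subseteq> S" by (fact bsS)
    show "\<forall>i<length bs. \<forall>j<length bs. minner (bs ! i) (bs ! j) = (if i = j then 1 else 0)"
    proof (intro allI impI)
      fix i j assume "i < length bs" "j < length bs"
      then have "bs ! j \<in> S" using bsS nth_mem by blast
      then show "minner (bs ! i) (bs ! j) = (if i = j then 1 else 0)"
        using orth \<open>i < length bs\<close> \<open>j < length bs\<close> unfolding orthonormal_def ip[OF \<open>bs ! j \<in> S\<close>] by blast
    qed
    show "\<forall>x\<in>S. \<forall>k<N. \<forall>l<N. x $$ (k,l) = (\<Sum>i<length bs. minner (bs ! i) x * bs ! i $$ (k,l))"
    proof (intro ballI allI impI)
      fix x k l assume "x \<in> S" "k < N" "l < N"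
      then have "(k,l) \<in> ?I" by simp
      then show "x $$ (k,l) = (\<Sum>i<length bs. minner (bs ! i) x * bs ! i $$ (k,l))"
        using ex \<open>x \<in> S\<close> unfolding ip[OF \<open>x \<in> S\<close>] by blast
    qed
  qed
  then show ?thesis by blast
qed


lemma assoc5:
  assumes "A \<in> carrier_mat N N" "B \<in> carrier_mat N N" "C \<in> carrier_mat N N" "D \<in> carrier_mat N N" "E \<in> carrier_mat N N"
  shows "A * B * C * (D * E) = A * (B * C * D) * E"
proof -
  have ABC: "A * B * C \<in> carrier_mat N N" and BC: "B * C \<in> carrier_mat N N" using assms by auto
  have e1: "A * B * C * (D * E) = A * B * C * D * E" using assoc_mult_mat[OF ABC assms(4,5)] by simp
  have e2: "A * B * C = A * (B * C)" using assoc_mult_mat[OF assms(1,2,3)] .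
  have e3: "A * (B * C) * D = A * (B * C * D)" using assoc_mult_mat[OF assms(1) BC assms(4)] .
  have "A * B * C * (D * E) = A * B * C * D * E" by (rule e1)
  also have "\<dots> = A * (B * C) * D * E" by (simp only: e2)
  also have "\<dots> = A * (B * C * D) * E" by (simp only: e3)
  finally show ?thesis .
qed

lemma conj_car: "M \<in> carrier_mat N N \<Longrightarrow> Y \<in> carrier_mat N N \<Longrightarrow> M * Y * cadj M \<in> carrier_mat N N"
  by (intro mult_carrier_mat cadj_carrier) auto


theorem lemma5:
  fixes q n :: nat and G :: "complex mat set" and C :: "complex vec set"
    and W :: "complex mat set" and E :: "complex mat"
    and lam R :: "complex mat \<Rightarrow> complex"
  assumes "q \<ge> 1" and "n \<ge> 1"
    and "finite_subgroup_U q G"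
    and "vsubspace (q ^ n) C"
    and "vinvariant G (tensor_action q n) C"
    and "virreducible (q ^ n) G (tensor_action q n) C"
    and "\<forall>g\<in>G. lam g = vcharacter (q ^ n) (tensor_action q n) C g"
    and "msubspace (q ^ n) W"
    and "minvariant {U. unitary_mat q U} (conj_action q n) W"
    and "mirreducible (q ^ n) {U. unitary_mat q U} (conj_action q n) W"
    and "\<forall>U. unitary_mat q U \<longrightarrow> R U = mcharacter (q ^ n) (conj_action q n) W U"
    and "E \<in> W"
    and "(1 / of_nat (card G)) * (\<Sum>g\<in>G. cnj 1 * (cnj (lam g) * R g * lam g)) = 0"
  shows "\<exists>c::complex. \<forall>\<psi>\<in>C. \<forall>\<phi>\<in>C. vinner \<psi> (E *\<^sub>v \<phi>) = c * vinner \<psi> \<phi>"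
proof -
  define N where "N = q ^ n"
  have q0: "0 < q" using assms(1) by simp
  define u where "u = (\<lambda>g. tensor_pow q n g)"
  have ucar[simp]: "u g \<in> carrier_mat N N" for g unfolding u_def N_def by simp
  have finG: "finite G" and Gunit: "\<forall>g\<in>G. unitary_mat q g" and oneG: "1\<^sub>m q \<in> G"
    and mulG: "\<forall>g\<in>G. \<forall>h\<in>G. g * h \<in> G" and cadjG: "\<forall>g\<in>G. cadj g \<in> G"
    using assms(3) unfolding finite_subgroup_U_def by auto
  have gcar: "g \<in> carrier_mat q q" if "g \<in> G" for g using Gunit that unfolding unitary_mat_def by auto
  have gu1: "g * cadj g = 1\<^sub>m q" "cadj g * g = 1\<^sub>m q" if "g \<in> G" for g
    using Gunit that unfolding unitary_mat_def by auto
  have umul: "u (g * h) = u g * u h" if "g \<in> G" "h \<in> G" for g h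
    unfolding u_def using tp_mult[OF q0 gcar[OF that(1)] gcar[OF that(2)]] .
  have uadj: "u (cadj g) = cadj (u g)" if "g \<in> G" for g
    unfolding u_def using tp_cadj[OF gcar[OF that] q0] .
  have uu1: "u g * cadj (u g) = 1\<^sub>m N" if "g \<in> G" for g
  proof -
    have "u g * cadj (u g) = u (g * cadj g)" using that cadjG by (simp add: umul uadj)
    also have "\<dots> = 1\<^sub>m N" using that gu1 tp_one[OF q0] unfolding u_def N_def by simp
    finally show ?thesis .
  qed
  have uu2: "cadj (u g) * u g = 1\<^sub>m N" if "g \<in> G" for g
  proof -
    have "cadj (u g) * u g = u (cadj g * g)" using that cadjG by (simp add: umul uadj)
    also have "\<dots> = 1\<^sub>m N" using that gu1 tp_one[OF q0] unfolding u_def N_def by simp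
    finally show ?thesis .
  qed
  have vsub: "vsubspace N C" using assms(4) unfolding N_def .
  have Csub: "C \<subseteq> carrier_vec N" using vsub unfolding vsubspace_def by auto
  have Cinv: "u g *\<^sub>v x \<in> C" if "g \<in> G" "x \<in> C" for g x
    using assms(5) that unfolding vinvariant_def tensor_action_def u_def by auto
  have msub: "msubspace N W" using assms(8) unfolding N_def .
  have Wsub: "W \<subseteq> carrier_mat N N" using msub unfolding msubspace_def by auto
  have Winv: "u g * X * cadj (u g) \<in> W" if "g \<in> G" "X \<in> W" for g X
    using assms(9) that Gunit unfolding minvariant_def conj_action_def u_def by auto
  define c where "c = (SOME bs. vonb N C bs)"
  have c_onb: "vonb N C c" unfolding c_def using someI_ex[OF vonb_exists[OF vsub]] .
  define d where "d = length c"
  have cC: "c ! i \<in> C" if "i < d" for i using c_onb that unfolding vonb_def d_def by auto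
  have ccar: "c ! i \<in> carrier_vec N" if "i < d" for i using cC[OF that] Csub by auto
  have cexp: "\<forall>k<N. x $ k = (\<Sum>i\<in>{..<d}. vinner (c ! i) x * (c ! i) $ k)" if "x \<in> C" for x
    using c_onb that unfolding vonb_def d_def by auto
  define B where "B = (SOME bs. monb N W bs)"
  have B_onb: "monb N W B" unfolding B_def using someI_ex[OF monb_exists[OF msub]] .
  define m where "m = length B"
  have BW: "B ! a \<in> W" if "a < m" for a using B_onb that unfolding monb_def m_def by auto
  have Bcar: "B ! a \<in> carrier_mat N N" if "a < m" for a using BW[OF that] Wsub by auto
  have Bexp: "\<forall>p<N. \<forall>r<N. X $$ (p,r) = (\<Sum>a\<in>{..<m}. minner (B ! a) X * (B ! a) $$ (p,r))" if "X \<in> W" for X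
    using B_onb that unfolding monb_def m_def by auto
  define DC where "DC = (\<lambda>g i i'. vinner (c ! i) (u g *\<^sub>v c ! i'))"
  define DW where "DW = (\<lambda>g a a'. minner (B ! a) (u g * B ! a' * cadj (u g)))"
  have lamD: "lam g = (\<Sum>i<d. DC g i i)" if "g \<in> G" for g
    using assms(7) that unfolding vcharacter_def DC_def d_def c_def N_def u_def tensor_action_def Let_def
    by simp
  have RD: "R g = (\<Sum>a<m. DW g a a)" if "g \<in> G" for g
    using assms(11) Gunit that unfolding mcharacter_def DW_def m_def B_def N_def u_def conj_action_def Let_def
    by simp
  have DCmul: "(\<Sum>k\<in>{..<d}. DC g i k * DC h k i') = DC (g * h) i i'"
    if g: "g \<in> G" and h: "h \<in> G" and i: "i < d" and i': "i' < d" for g h i i'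
  proof -
    define y where "y = u h *\<^sub>v c ! i'"
    have yC: "y \<in> C" unfolding y_def using Cinv[OF h cC[OF i']] .
    have ycar: "y \<in> carrier_vec N" using yC Csub by auto
    have "DC (g * h) i i' = vinner (c ! i) (u g *\<^sub>v y)"
      unfolding DC_def y_def using umul[OF g h] assoc_mult_mat_vec[OF ucar ucar ccar[OF i'], of g h] by simp
    also have "\<dots> = (\<Sum>k\<in>{..<d}. vinner (c ! k) y * vinner (c ! i) (u g *\<^sub>v c ! k))"
    proof (rule vinner_lin2[where N=N])
      show "u g *\<^sub>v y \<in> carrier_vec N" using mult_mat_vec_carrier[OF ucar ycar] .
      show "\<forall>j\<in>{..<d}. u g *\<^sub>v c ! j \<in> carrier_vec N" using mult_mat_vec_carrier[OF ucar ccar] by blast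
      show "\<forall>k<N. (u g *\<^sub>v y) $ k = (\<Sum>j\<in>{..<d}. vinner (c ! j) y * (u g *\<^sub>v c ! j) $ k)"
        by (rule mv_lin[OF ucar ycar]) (use ccar cexp[OF yC] in auto)
    qed
    also have "\<dots> = (\<Sum>k\<in>{..<d}. DC g i k * DC h k i')"
      unfolding DC_def y_def by (simp add: mult.commute)
    finally show ?thesis by simp
  qed
  have DCinv: "DC (cadj g) i i' = cnj (DC g i' i)" if g: "g \<in> G" and i: "i < d" and i': "i' < d" for g i i'
    unfolding DC_def using uadj[OF g] vinner_adj2[OF ucar ccar[OF i] ccar[OF i']] by simp
  have DCrep: "rep_prop G (*) cadj {..<d} DC"
    unfolding rep_prop_def using DCmul DCinv by auto
  have DWmul: "(\<Sum>k\<in>{..<m}. DW g a k * DW h k a') = DW (g * h) a a'"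
    if g: "g \<in> G" and h: "h \<in> G" and a: "a < m" and a': "a' < m" for g h a a'
  proof -
    define Y where "Y = u h * B ! a' * cadj (u h)"
    have YW: "Y \<in> W" unfolding Y_def using Winv[OF h BW[OF a']] .
    have Ycar: "Y \<in> carrier_mat N N" using YW Wsub by auto
    have "u (g * h) * B ! a' * cadj (u (g * h)) = u g * Y * cadj (u g)"
    proof -
      have "u (g * h) * B ! a' * cadj (u (g * h)) = u g * u h * B ! a' * (cadj (u h) * cadj (u g))"
        using umul[OF g h] cadj_mult[OF ucar ucar] by simp
      also have "\<dots> = u g * (u h * B ! a' * cadj (u h)) * cadj (u g)"
        using assoc5[OF ucar ucar Bcar[OF a'] cadj_carrier[OF ucar] cadj_carrier[OF ucar]] .
      finally show ?thesis unfolding Y_def .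
    qed
    then have "DW (g * h) a a' = minner (B ! a) (u g * Y * cadj (u g))"
      unfolding DW_def by simp
    also have "\<dots> = (\<Sum>k\<in>{..<m}. minner (B ! k) Y * minner (B ! a) (u g * B ! k * cadj (u g)))"
    proof (rule minner_lin2[where N=N])
      show "u g * Y * cadj (u g) \<in> carrier_mat N N" using conj_car[OF ucar Ycar] .
      show "\<forall>j\<in>{..<m}. u g * B ! j * cadj (u g) \<in> carrier_mat N N" using conj_car[OF ucar Bcar] by blast
      show "\<forall>p<N. \<forall>r<N. (u g * Y * cadj (u g)) $$ (p, r) = (\<Sum>j\<in>{..<m}. minner (B ! j) Y * (u g * B ! j * cadj (u g)) $$ (p, r))"
        by (rule conj_lin[OF ucar _ Ycar]) (use Bcar Bexp[OF YW] in auto)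
    qed
    also have "\<dots> = (\<Sum>k\<in>{..<m}. DW g a k * DW h k a')"
      unfolding DW_def Y_def by (simp add: mult.commute)
    finally show ?thesis by simp
  qed
  have DWinv: "DW (cadj g) a a' = cnj (DW g a' a)" if g: "g \<in> G" and a: "a < m" and a': "a' < m" for g a a'
    unfolding DW_def using uadj[OF g] minner_adj[OF Bcar[OF a] Bcar[OF a'] ucar] by simp
  have DWrep: "rep_prop G (*) cadj {..<m} DW"
    unfolding rep_prop_def using DWmul DWinv by auto
  define X where "X = {..<m} \<times> ({..<d} \<times> {..<d})"
  define K where "K = (\<lambda>g x y. cnj (DW g (fst x) (fst y)) * (DC g (fst (snd x)) (fst (snd y)) * cnj (DC g (snd (snd x)) (snd (snd y)))))"
  have Krep: "rep_prop G (*) cadj X K"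
    unfolding X_def K_def
    by (rule rep_prop_tensor[OF rep_prop_cnj[OF DWrep] rep_prop_tensor[OF DCrep rep_prop_cnj[OF DCrep]]])
  have bm: "\<forall>g\<in>G. bij_betw ((*) g) G G"
  proof
    fix g assume g: "g \<in> G"
    show "bij_betw ((*) g) G G"
    proof (rule bij_betw_byWitness[where f'="(*) (cadj g)"])
      show "\<forall>h\<in>G. cadj g * (g * h) = h"
      proof
        fix h assume h: "h \<in> G"
        have "cadj g * (g * h) = cadj g * g * h"
          using assoc_mult_mat[OF cadj_carrier[OF gcar[OF g]] gcar[OF g] gcar[OF h]] by simp
        also have "\<dots> = h" using gu1[OF g] gcar[OF h] by (simp add: left_mult_one_mat)
        finally show "cadj g * (g * h) = h" .
      qed
      show "\<forall>h\<in>G. g * (cadj g * h) = h"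
      proof
        fix h assume h: "h \<in> G"
        have "g * (cadj g * h) = g * cadj g * h"
          using assoc_mult_mat[OF gcar[OF g] cadj_carrier[OF gcar[OF g]] gcar[OF h]] by simp
        also have "\<dots> = h" using gu1[OF g] gcar[OF h] by (simp add: left_mult_one_mat)
        finally show "g * (cadj g * h) = h" .
      qed
      show "(*) g ` G \<subseteq> G" using mulG g by auto
      show "(*) (cadj g) ` G \<subseteq> G" using mulG cadjG g by auto
    qed
  qed
  have bi: "bij_betw cadj G G"
    by (rule bij_betw_byWitness[where f'=cadj]) (use cadjG in auto)
  have sumX: "(\<Sum>x\<in>X. f x) = (\<Sum>a<m. \<Sum>i<d. \<Sum>j<d. f (a, (i, j)))" for f :: "nat \<times> nat \<times> nat \<Rightarrow> complex"
    unfolding X_def by (simp add: sum.cartesian_product)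
  have trg: "(\<Sum>x\<in>X. K g x x) = cnj (R g) * lam g * cnj (lam g)" if g: "g \<in> G" for g
  proof -
    have "(\<Sum>x\<in>X. K g x x) = (\<Sum>a<m. \<Sum>i<d. \<Sum>j<d. cnj (DW g a a) * (DC g i i * cnj (DC g j j)))"
      unfolding sumX K_def by simp
    also have "\<dots> = (\<Sum>a<m. cnj (DW g a a)) * ((\<Sum>i<d. DC g i i) * (\<Sum>j<d. cnj (DC g j j)))"
    proof -
      have "(\<Sum>a<m. cnj (DW g a a)) * ((\<Sum>i<d. DC g i i) * (\<Sum>j<d. cnj (DC g j j)))
          = (\<Sum>a<m. cnj (DW g a a)) * (\<Sum>i<d. \<Sum>j<d. DC g i i * cnj (DC g j j))"
        by (simp only: sum_product)
      also have "\<dots> = (\<Sum>a<m. \<Sum>i<d. cnj (DW g a a) * (\<Sum>j<d. DC g i i * cnj (DC g j j)))"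
        by (simp only: sum_product)
      also have "\<dots> = (\<Sum>a<m. \<Sum>i<d. \<Sum>j<d. cnj (DW g a a) * (DC g i i * cnj (DC g j j)))"
        by (simp only: sum_distrib_left)
      finally show ?thesis by (rule sym)
    qed
    also have "\<dots> = cnj (R g) * lam g * cnj (lam g)"
      using lamD[OF g] RD[OF g] by (simp add: cnj_sum)
    finally show ?thesis .
  qed
  have cardG: "card G \<noteq> 0" using finG oneG by auto
  have hsum: "(\<Sum>g\<in>G. cnj (lam g) * R g * lam g) = 0"
    using assms(13) cardG by simp
  have tr: "(\<Sum>g\<in>G. \<Sum>x\<in>X. K g x x) = 0"
  proof -
    have "(\<Sum>g\<in>G. \<Sum>x\<in>X. K g x x) = (\<Sum>g\<in>G. cnj (cnj (lam g) * R g * lam g))"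
      by (rule sum.cong[OF refl]) (simp add: trg mult_ac)
    also have "\<dots> = cnj (\<Sum>g\<in>G. cnj (lam g) * R g * lam g)" by (simp only: cnj_sum)
    finally show ?thesis using hsum by simp
  qed
  have S1: "(\<Sum>i'<d. \<Sum>j'<d. DC g i i' * cnj (DC g j j') * vinner (c ! i') (Y *\<^sub>v c ! j'))
      = vinner (c ! i) ((u g * Y * cadj (u g)) *\<^sub>v c ! j)"
    if g: "g \<in> G" and Ycar: "Y \<in> carrier_mat N N" and i: "i < d" and j: "j < d" for g Y i j
  proof -
    define U where "U = u g"
    have Ucar: "U \<in> carrier_mat N N" unfolding U_def by simp
    have cUcar: "cadj U \<in> carrier_mat N N" using Ucar by simp
    define v where "v = (\<lambda>k. cadj U *\<^sub>v c ! k)"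
    have vC: "v k \<in> C" if "k < d" for k
      unfolding v_def U_def using Cinv[OF bspec[OF cadjG g] cC[OF that]] uadj[OF g] by simp
    have vcar: "v k \<in> carrier_vec N" if "k < d" for k using vC[OF that] Csub by auto
    have vexp: "\<forall>p<N. v k $ p = (\<Sum>k'\<in>{..<d}. cnj (DC g k k') * c ! k' $ p)" if k: "k < d" for k
    proof -
      have "vinner (c ! k') (v k) = cnj (DC g k k')" if "k' \<in> {..<d}" for k'
        unfolding v_def DC_def U_def using vinner_adj2[OF ucar ccar ccar[OF k]] that by simp
      then show ?thesis using cexp[OF vC[OF k]] by simp
    qed
    have Yvcar: "Y *\<^sub>v v j \<in> carrier_vec N" using mult_mat_vec_carrier[OF Ycar vcar[OF j]] .
    have inner: "vinner (c ! i') (Y *\<^sub>v v j) = (\<Sum>j'\<in>{..<d}. cnj (DC g j j') * vinner (c ! i') (Y *\<^sub>v c ! j'))" for i'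
    proof (rule vinner_lin2[where N=N])
      show "Y *\<^sub>v v j \<in> carrier_vec N" by (fact Yvcar)
      show "\<forall>j'\<in>{..<d}. Y *\<^sub>v c ! j' \<in> carrier_vec N" using mult_mat_vec_carrier[OF Ycar ccar] by blast
      show "\<forall>k<N. (Y *\<^sub>v v j) $ k = (\<Sum>j'\<in>{..<d}. cnj (DC g j j') * (Y *\<^sub>v c ! j') $ k)"
        by (rule mv_lin[OF Ycar vcar[OF j]]) (use ccar vexp[OF j] in auto)
    qed
    have outer: "vinner (v i) (Y *\<^sub>v v j) = (\<Sum>i'\<in>{..<d}. cnj (cnj (DC g i i')) * vinner (c ! i') (Y *\<^sub>v v j))"
      by (rule vinner_lin1[where N=N]) (use Yvcar vexp[OF i] in auto)
    have "(\<Sum>i'<d. \<Sum>j'<d. DC g i i' * cnj (DC g j j') * vinner (c ! i') (Y *\<^sub>v c ! j'))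
        = (\<Sum>i'<d. DC g i i' * vinner (c ! i') (Y *\<^sub>v v j))"
      by (simp add: inner sum_distrib_left mult.assoc)
    also have "\<dots> = vinner (v i) (Y *\<^sub>v v j)" using outer by simp
    also have "\<dots> = vinner (c ! i) (U *\<^sub>v (Y *\<^sub>v v j))"
      unfolding v_def using vinner_adj[OF Ucar ccar[OF i] Yvcar[unfolded v_def]] .
    also have "U *\<^sub>v (Y *\<^sub>v v j) = (U * Y * cadj U) *\<^sub>v c ! j"
    proof -
      have "(U * Y * cadj U) *\<^sub>v c ! j = (U * Y) *\<^sub>v (cadj U *\<^sub>v c ! j)"
        using assoc_mult_mat_vec[OF mult_carrier_mat[OF Ucar Ycar] cUcar ccar[OF j]] .
      also have "\<dots> = U *\<^sub>v (Y *\<^sub>v (cadj U *\<^sub>v c ! j))"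
        using assoc_mult_mat_vec[OF Ucar Ycar mult_mat_vec_carrier[OF cUcar ccar[OF j]]] .
      finally show ?thesis unfolding v_def by simp
    qed
    finally show ?thesis unfolding U_def .
  qed
  have S2: "(\<Sum>a'<m. cnj (DW g a a') * vinner (c ! i) ((u g * B ! a' * cadj (u g)) *\<^sub>v c ! j))
      = vinner (c ! i) (B ! a *\<^sub>v c ! j)"
    if g: "g \<in> G" and a: "a < m" and i: "i < d" and j: "j < d" for g a i j
  proof -
    define U where "U = u g"
    have Ucar: "U \<in> carrier_mat N N" unfolding U_def by simp
    have cUcar: "cadj U \<in> carrier_mat N N" using Ucar by simp
    define Z where "Z = cadj U * B ! a * U"
    have "Z = u (cadj g) * B ! a * cadj (u (cadj g))"
      unfolding Z_def U_def using uadj[OF g] by simp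
    then have ZW: "Z \<in> W" using Winv[OF bspec[OF cadjG g] BW[OF a]] by simp
    have Zcar: "Z \<in> carrier_mat N N" using ZW Wsub by auto
    have Zc: "minner (B ! a') Z = cnj (DW g a a')" if "a' < m" for a'
      unfolding Z_def DW_def U_def using minner_adj[OF Bcar[OF that] Bcar[OF a] ucar] .
    have Zexp: "\<forall>p<N. \<forall>r<N. Z $$ (p,r) = (\<Sum>a'\<in>{..<m}. cnj (DW g a a') * (B ! a') $$ (p,r))"
      using Bexp[OF ZW] Zc by simp
    have UZ: "U * Z * cadj U = B ! a"
    proof -
      have Ba: "B ! a \<in> carrier_mat N N" by (rule Bcar[OF a])
      have "U * Z * cadj U = U * (cadj U * B ! a * U) * cadj U" unfolding Z_def ..
      also have "cadj U * B ! a * U = cadj U * (B ! a * U)"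
        using assoc_mult_mat[OF cUcar Ba Ucar] .
      also have "U * (cadj U * (B ! a * U)) = U * cadj U * (B ! a * U)"
        using assoc_mult_mat[OF Ucar cUcar mult_carrier_mat[OF Ba Ucar]] by simp
      also have "U * cadj U = 1\<^sub>m N" unfolding U_def using uu1[OF g] .
      also have "1\<^sub>m N * (B ! a * U) = B ! a * U"
        using left_mult_one_mat[OF mult_carrier_mat[OF Ba Ucar]] .
      also have "B ! a * U * cadj U = B ! a * (U * cadj U)"
        using assoc_mult_mat[OF Ba Ucar cUcar] .
      also have "U * cadj U = 1\<^sub>m N" unfolding U_def using uu1[OF g] .
      also have "B ! a * 1\<^sub>m N = B ! a" using right_mult_one_mat[OF Ba] .
      finally show ?thesis .
    qed
    have L: "\<forall>p<N. \<forall>r<N. (U * Z * cadj U) $$ (p,r) = (\<Sum>a'\<in>{..<m}. cnj (DW g a a') * (U * B ! a' * cadj U) $$ (p,r))"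
      by (rule conj_lin[OF Ucar cUcar Zcar]) (use Bcar Zexp in auto)
    have L2: "\<forall>k<N. ((U * Z * cadj U) *\<^sub>v c ! j) $ k = (\<Sum>a'\<in>{..<m}. cnj (DW g a a') * ((U * B ! a' * cadj U) *\<^sub>v c ! j) $ k)"
      by (rule mv_lin_mat[OF conj_car[OF Ucar Zcar] ccar[OF j]]) (use conj_car[OF Ucar Bcar] L in auto)
    have "vinner (c ! i) ((U * Z * cadj U) *\<^sub>v c ! j) = (\<Sum>a'\<in>{..<m}. cnj (DW g a a') * vinner (c ! i) ((U * B ! a' * cadj U) *\<^sub>v c ! j))"
    proof (rule vinner_lin2[where N=N])
      show "(U * Z * cadj U) *\<^sub>v c ! j \<in> carrier_vec N"
        using mult_mat_vec_carrier[OF conj_car[OF Ucar Zcar] ccar[OF j]] .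
      show "\<forall>a'\<in>{..<m}. (U * B ! a' * cadj U) *\<^sub>v c ! j \<in> carrier_vec N"
        using mult_mat_vec_carrier[OF conj_car[OF Ucar Bcar] ccar[OF j]] by blast
    qed (fact L2)
    then have "vinner (c ! i) (B ! a *\<^sub>v c ! j) = (\<Sum>a'\<in>{..<m}. cnj (DW g a a') * vinner (c ! i) ((U * B ! a' * cadj U) *\<^sub>v c ! j))"
      by (simp only: UZ)
    then show ?thesis unfolding U_def by simp
  qed
  define t where "t = (\<lambda>x. vinner (c ! fst (snd x)) (B ! fst x *\<^sub>v c ! snd (snd x)))"
  have tinv: "\<forall>g\<in>G. \<forall>x\<in>X. (\<Sum>y\<in>X. K g x y * t y) = t x"
  proof (intro ballI)
    fix g x assume g: "g \<in> G" and x: "x \<in> X"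
    obtain a i j where xe: "x = (a, (i, j))" and a: "a < m" and i: "i < d" and j: "j < d"
      using x unfolding X_def by auto
    have "(\<Sum>y\<in>X. K g x y * t y) = (\<Sum>a'<m. \<Sum>i'<d. \<Sum>j'<d. cnj (DW g a a') * (DC g i i' * cnj (DC g j j') * vinner (c ! i') (B ! a' *\<^sub>v c ! j')))"
      unfolding sumX K_def t_def xe by (simp add: mult.assoc)
    also have "\<dots> = (\<Sum>a'<m. cnj (DW g a a') * (\<Sum>i'<d. \<Sum>j'<d. DC g i i' * cnj (DC g j j') * vinner (c ! i') (B ! a' *\<^sub>v c ! j')))"
      by (simp add: sum_distrib_left)
    also have "\<dots> = (\<Sum>a'<m. cnj (DW g a a') * vinner (c ! i) ((u g * B ! a' * cadj (u g)) *\<^sub>v c ! j))"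
      by (rule sum.cong[OF refl]) (simp add: S1[OF g Bcar i j])
    also have "\<dots> = t x" unfolding t_def xe using S2[OF g a i j] by simp
    finally show "(\<Sum>y\<in>X. K g x y * t y) = t x" .
  qed
  have finX: "finite X" unfolding X_def by simp
  have neG: "G \<noteq> {}" using oneG by auto
  have t0: "\<forall>x\<in>X. t x = 0"
    by (rule avg_zero[OF finG finX neG bm bi Krep tr tinv])
  have Ecar: "E \<in> carrier_mat N N" using assms(12) Wsub by auto
  have tE: "vinner (c ! i) (E *\<^sub>v c ! j) = 0" if i: "i < d" and j: "j < d" for i j
  proof -
    have "vinner (c ! i) (E *\<^sub>v c ! j) = (\<Sum>a\<in>{..<m}. minner (B ! a) E * vinner (c ! i) (B ! a *\<^sub>v c ! j))"
    proof (rule vinner_lin2[where N=N])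
      show "E *\<^sub>v c ! j \<in> carrier_vec N" using mult_mat_vec_carrier[OF Ecar ccar[OF j]] .
      show "\<forall>a\<in>{..<m}. B ! a *\<^sub>v c ! j \<in> carrier_vec N" using mult_mat_vec_carrier[OF Bcar ccar[OF j]] by blast
      show "\<forall>k<N. (E *\<^sub>v c ! j) $ k = (\<Sum>a\<in>{..<m}. minner (B ! a) E * (B ! a *\<^sub>v c ! j) $ k)"
        by (rule mv_lin_mat[OF Ecar ccar[OF j]]) (use Bcar Bexp[OF assms(12)] in auto)
    qed
    also have "\<dots> = 0"
    proof (rule sum.neutral, rule ballI)
      fix a assume "a \<in> {..<m}"
      then have "(a, (i, j)) \<in> X" unfolding X_def using i j by auto
      then have "t (a, (i, j)) = 0" using t0 by blast
      then show "minner (B ! a) E * vinner (c ! i) (B ! a *\<^sub>v c ! j) = 0" unfolding t_def by simp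
    qed
    finally show ?thesis .
  qed
  show ?thesis
  proof (intro exI ballI)
    fix \<psi> \<phi> assume \<psi>: "\<psi> \<in> C" and \<phi>: "\<phi> \<in> C"
    have \<phi>car: "\<phi> \<in> carrier_vec N" using \<phi> Csub by auto
    have Ephi: "E *\<^sub>v \<phi> \<in> carrier_vec N" using mult_mat_vec_carrier[OF Ecar \<phi>car] .
    have "vinner \<psi> (E *\<^sub>v \<phi>) = (\<Sum>j\<in>{..<d}. vinner (c ! j) \<phi> * vinner \<psi> (E *\<^sub>v c ! j))"
    proof (rule vinner_lin2[where N=N])
      show "E *\<^sub>v \<phi> \<in> carrier_vec N" by (fact Ephi)
      show "\<forall>j\<in>{..<d}. E *\<^sub>v c ! j \<in> carrier_vec N" using mult_mat_vec_carrier[OF Ecar ccar] by blast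
      show "\<forall>k<N. (E *\<^sub>v \<phi>) $ k = (\<Sum>j\<in>{..<d}. vinner (c ! j) \<phi> * (E *\<^sub>v c ! j) $ k)"
        by (rule mv_lin[OF Ecar \<phi>car]) (use ccar cexp[OF \<phi>] in auto)
    qed
    also have "\<dots> = 0"
    proof (rule sum.neutral, rule ballI)
      fix j assume j: "j \<in> {..<d}"
      have Ecj: "E *\<^sub>v c ! j \<in> carrier_vec N" using mult_mat_vec_carrier[OF Ecar ccar] j by blast
      have "vinner \<psi> (E *\<^sub>v c ! j) = (\<Sum>i\<in>{..<d}. cnj (vinner (c ! i) \<psi>) * vinner (c ! i) (E *\<^sub>v c ! j))"
        by (rule vinner_lin1[where N=N]) (use Ecj cexp[OF \<psi>] in auto)
      also have "\<dots> = 0" using tE j by simp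
      finally show "vinner (c ! j) \<phi> * vinner \<psi> (E *\<^sub>v c ! j) = 0" by simp
    qed
    finally show "vinner \<psi> (E *\<^sub>v \<phi>) = 0 * vinner \<psi> \<phi>" by simp
  qed
qed

end
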